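(* Let $M$ be a finite monoid and $k$ a field. If there exists an idempotent $e\in M$ such that the monoid $eMe$ has two irreducible elements that are not associates (in $eMe$), then the monoid algebra $kM$ is of infinite representation type.
   Context: For an idempotent $e\in M$, $eMe=\{eme: m\in M\}$ is a monoid with identity $e$ under the multiplication of $M$. A non-unit $p$ in a monoid $N$ is irreducible if whenever $p=ab$ with $a,b\in N$, then $a$ or $b$ is a unit of $N$. Two elements $a,b\in N$ are associates if there exist units $u,v\in N$ with $a=ubv$. A finite-dimensional $k$-algebra is of infinite representation type if it has infinitely many isomorphism classes of finite-dimensional indecomposable modules. *)

theory Defs
  imports "Jordan_Normal_Form.Matrix"
begin

definition corner :: "'m::monoid_mult \<Rightarrow> 'm set" where
  "corner e = {e * m * e | m. True}"

definition corner_unit :: "'m::monoid_mult \<Rightarrow> 'm \<Rightarrow> bool" where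
  "corner_unit e u \<longleftrightarrow> u \<in> corner e \<and> (\<exists>v\<in>corner e. u * v = e \<and> v * u = e)"

definition corner_irreducible :: "'m::monoid_mult \<Rightarrow> 'm \<Rightarrow> bool" where
  "corner_irreducible e p \<longleftrightarrow> p \<in> corner e \<and> \<not> corner_unit e p \<and>
     (\<forall>a\<in>corner e. \<forall>b\<in>corner e. p = a * b \<longrightarrow> corner_unit e a \<or> corner_unit e b)"

definition corner_associates :: "'m::monoid_mult \<Rightarrow> 'm \<Rightarrow> 'm \<Rightarrow> bool" where
  "corner_associates e a b \<longleftrightarrow> (\<exists>u v. corner_unit e u \<and> corner_unit e v \<and> a = u * b * v)"

section \<open>Finite-dimensional modules over the monoid algebra kM, as matrix representations of M\<close>

definition is_rep :: "nat \<Rightarrow> ('m::monoid_mult \<Rightarrow> 'k::field mat) \<Rightarrow> bool" where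
  "is_rep n \<rho> \<longleftrightarrow> (\<forall>m. \<rho> m \<in> carrier_mat n n) \<and> \<rho> 1 = 1\<^sub>m n \<and>
     (\<forall>a b. \<rho> (a * b) = \<rho> a * \<rho> b)"

definition rep_iso :: "nat \<Rightarrow> ('m::monoid_mult \<Rightarrow> 'k::field mat) \<Rightarrow> nat \<Rightarrow> ('m \<Rightarrow> 'k mat) \<Rightarrow> bool" where
  "rep_iso n \<rho> n' \<sigma> \<longleftrightarrow> n = n' \<and>
     (\<exists>P \<in> carrier_mat n n. invertible_mat P \<and> (\<forall>m. P * \<rho> m = \<sigma> m * P))"

definition rep_sum :: "nat \<Rightarrow> ('m \<Rightarrow> 'k::field mat) \<Rightarrow> nat \<Rightarrow> ('m \<Rightarrow> 'k mat) \<Rightarrow> ('m \<Rightarrow> 'k mat)" where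
  "rep_sum n1 \<rho>1 n2 \<rho>2 = (\<lambda>m. four_block_mat (\<rho>1 m) (0\<^sub>m n1 n2) (0\<^sub>m n2 n1) (\<rho>2 m))"

definition indecomposable_rep :: "nat \<Rightarrow> ('m::monoid_mult \<Rightarrow> 'k::field mat) \<Rightarrow> bool" where
  "indecomposable_rep n \<rho> \<longleftrightarrow> is_rep n \<rho> \<and> n > 0 \<and>
     \<not> (\<exists>n1 \<rho>1 n2 \<rho>2. n1 > 0 \<and> n2 > 0 \<and> is_rep n1 \<rho>1 \<and> is_rep n2 \<rho>2 \<and>
          rep_iso n \<rho> (n1 + n2) (rep_sum n1 \<rho>1 n2 \<rho>2))"

definition infinite_rep_type :: "'m::monoid_mult itself \<Rightarrow> 'k::field itself \<Rightarrow> bool" where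
  "infinite_rep_type _ _ \<longleftrightarrow>
     \<not> (\<exists>S :: (nat \<times> ('m \<Rightarrow> 'k mat)) set. finite S \<and>
          (\<forall>n \<rho>. indecomposable_rep n \<rho> \<longrightarrow> (\<exists>(n', \<sigma>) \<in> S. rep_iso n \<rho> n' \<sigma>)))"

end

theory Submission
  imports Defs "Jordan_Normal_Form.DL_Rank" "Jordan_Normal_Form.Determinant"
begin

lemma mult_unit_vec_col:
  fixes A :: "'a::semiring_1 mat"
  assumes A: "A \<in> carrier_mat nr nc" and j: "j < nc"
  shows "A *\<^sub>v unit_vec nc j = col A j"
proof (rule eq_vecI)
  fix i assume "i < dim_vec (col A j)"
  hence i: "i < nr" using A by simp
  have "row A i \<bullet> unit_vec nc j = row A i $ j" by (rule scalar_prod_right_unit[OF j])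
  thus "(A *\<^sub>v unit_vec nc j) $ i = col A j $ i" using A i j by simp
qed (use A in simp)

lemma basis_of_subspace:
  fixes S :: "'k::field vec set"
  assumes S: "S \<subseteq> carrier_vec D" "0\<^sub>v D \<in> S" "\<And>x y. x\<in>S \<Longrightarrow> y\<in>S \<Longrightarrow> x + y \<in> S"
      "\<And>c x. x\<in>S \<Longrightarrow> c \<cdot>\<^sub>v x \<in> S"
  shows "\<exists>d B. B \<in> carrier_mat D d \<and>
    (\<forall>c. c \<in> carrier_vec d \<longrightarrow> B *\<^sub>v c \<in> S) \<and>
    (\<forall>x. x \<in> S \<longrightarrow> (\<exists>c\<in>carrier_vec d. B *\<^sub>v c = x)) \<and>
    (\<forall>c. c \<in> carrier_vec d \<longrightarrow> B *\<^sub>v c = 0\<^sub>v D \<longrightarrow> c = 0\<^sub>v d)"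
proof -
  interpret VS: vec_space "TYPE('k)" D .
  let ?P = "\<lambda>A. A \<subseteq> S \<and> VS.lin_indpt A"
  have P0: "?P {}" unfolding VS.lin_dep_def by auto
  have bnd: "finite A \<and> card A \<le> D" if "?P A" for A
    using VS.li_le_dim[of A] that S(1) VS.dim_is_n by auto
  obtain A where finA: "finite A" and maxA: "maximal A ?P"
    using maximal_exists[of ?P D "{}", OF bnd P0] by blast
  have AS: "A \<subseteq> S" and liA: "VS.lin_indpt A" using maxA unfolding maximal_def by auto
  have AC: "A \<subseteq> carrier_vec D" using AS S(1) by auto
  obtain bs where bs: "set bs = A" "distinct bs" using finite_distinct_list[OF finA] by blast
  define B where "B = mat_of_cols D bs"
  define d where "d = length bs"
  have Bc: "B \<in> carrier_mat D d" unfolding B_def d_def by auto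
  have colsB: "cols B = bs" unfolding B_def using AC bs by (intro cols_mat_of_cols) auto
  have sub: "submodule class_ring S VS.V"
    apply (rule submodule.intro)
    using S vec_module by (auto simp: class_ring_simps)
  have spanS: "VS.span A \<subseteq> S" by (rule VS.span_is_subset[OF AS sub])
  have Sspan: "S \<subseteq> VS.span A"
  proof
    fix w assume w: "w \<in> S"
    show "w \<in> VS.span A"
    proof (cases "w \<in> A")
      case True thus ?thesis using VS.in_own_span[OF AC] by auto
    next
      case False
      have "VS.lin_dep (A \<union> {w})"
      proof (rule ccontr)
        assume "\<not> VS.lin_dep (A \<union> {w})"
        hence "?P (A \<union> {w})" using AS w by auto
        hence "A \<union> {w} = A" using maxA unfolding maximal_def by blast
        thus False using False by auto
      qed
      thus ?thesis using VS.lin_dep_iff_in_span[OF AC liA _ False] w S(1) by auto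
    qed
  qed
  have colsp: "VS.span A = {y\<in>carrier_vec D. \<exists>x\<in>carrier_vec d. B *\<^sub>v x = y}"
    using VS.col_space_eq[OF Bc] Bc unfolding VS.col_space_def colsB bs(1) by auto
  have P1: "B *\<^sub>v c \<in> S" if "c \<in> carrier_vec d" for c
  proof -
    have "B *\<^sub>v c \<in> VS.span A" unfolding colsp using Bc that by auto
    thus "B *\<^sub>v c \<in> S" using spanS by auto
  qed
  have P2: "\<exists>c\<in>carrier_vec d. B *\<^sub>v c = x" if "x \<in> S" for x
    using Sspan colsp that by auto
  have P3: "c = 0\<^sub>v d" if c: "c \<in> carrier_vec d" and z: "B *\<^sub>v c = 0\<^sub>v D" for c
  proof (rule ccontr)
    assume "c \<noteq> 0\<^sub>v d"
    from VS.lin_depI[OF Bc c this z] colsB bs liA show False by auto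
  qed
  show ?thesis using Bc P1 P2 P3 by blast
qed

lemma inj_cancel:
  fixes B :: "'k::field mat"
  assumes B: "B \<in> carrier_mat D d"
    and inj: "\<And>c. c \<in> carrier_vec d \<Longrightarrow> B *\<^sub>v c = 0\<^sub>v D \<Longrightarrow> c = 0\<^sub>v d"
    and X: "X \<in> carrier_mat d k" and Y: "Y \<in> carrier_mat d k" and eq: "B * X = B * Y"
  shows "X = Y"
proof (rule mat_col_eqI)
  fix j assume j: "j < dim_col Y"
  hence j': "j < k" using Y by auto
  have "B *\<^sub>v col X j = B *\<^sub>v col Y j"
    using col_mult2[OF B X j'] col_mult2[OF B Y j'] eq by simp
  hence "B *\<^sub>v (col X j - col Y j) = 0\<^sub>v D"
    using B X Y j' by (simp add: mult_minus_distrib_mat_vec)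
  hence "col X j - col Y j = 0\<^sub>v d" using inj X Y j' by auto
  hence z: "\<And>i. i < d \<Longrightarrow> (col X j - col Y j) $ i = 0" by simp
  show "col X j = col Y j"
  proof (rule eq_vecI)
    fix i assume "i < dim_vec (col Y j)"
    hence i: "i < d" using Y by auto
    show "col X j $ i = col Y j $ i" using z[OF i] X Y i by simp
  qed (use X Y in simp)
qed (use X Y in auto)

lemma subrep:
  fixes \<rho> :: "'m::monoid_mult \<Rightarrow> 'k::field mat"
  assumes rep: "is_rep D \<rho>"
    and S: "S \<subseteq> carrier_vec D" "0\<^sub>v D \<in> S" "\<And>x y. x\<in>S \<Longrightarrow> y\<in>S \<Longrightarrow> x + y \<in> S"
      "\<And>c x. x\<in>S \<Longrightarrow> c \<cdot>\<^sub>v x \<in> S"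
    and inv: "\<And>m x. x \<in> S \<Longrightarrow> \<rho> m *\<^sub>v x \<in> S"
  obtains d B \<sigma> where "B \<in> carrier_mat D d" "is_rep d \<sigma>" "\<And>m. \<rho> m * B = B * \<sigma> m"
    "\<And>c. c \<in> carrier_vec d \<Longrightarrow> B *\<^sub>v c \<in> S"
    "\<And>x. x \<in> S \<Longrightarrow> \<exists>c\<in>carrier_vec d. B *\<^sub>v c = x"
    "\<And>c. c \<in> carrier_vec d \<Longrightarrow> B *\<^sub>v c = 0\<^sub>v D \<Longrightarrow> c = 0\<^sub>v d"
proof -
  obtain d B where B: "B \<in> carrier_mat D d"
    and inS': "\<forall>c. c \<in> carrier_vec d \<longrightarrow> B *\<^sub>v c \<in> S"
    and span': "\<forall>x. x \<in> S \<longrightarrow> (\<exists>c\<in>carrier_vec d. B *\<^sub>v c = x)"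
    and inj': "\<forall>c. c \<in> carrier_vec d \<longrightarrow> B *\<^sub>v c = 0\<^sub>v D \<longrightarrow> c = 0\<^sub>v d"
    using basis_of_subspace[OF S(1) S(2) S(3) S(4)] by blast
  have inS: "\<And>c. c \<in> carrier_vec d \<Longrightarrow> B *\<^sub>v c \<in> S" using inS' by blast
  have span: "\<And>x. x \<in> S \<Longrightarrow> \<exists>c\<in>carrier_vec d. B *\<^sub>v c = x" using span' by blast
  have inj: "\<And>c. c \<in> carrier_vec d \<Longrightarrow> B *\<^sub>v c = 0\<^sub>v D \<Longrightarrow> c = 0\<^sub>v d" using inj' by blast
  have rhoc: "\<rho> m \<in> carrier_mat D D" for m using rep unfolding is_rep_def by auto
  define crd where "crd x = (SOME c. c \<in> carrier_vec d \<and> B *\<^sub>v c = x)" for x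
  have crd: "crd x \<in> carrier_vec d \<and> B *\<^sub>v crd x = x" if "x \<in> S" for x
  proof -
    from span[OF that] have "\<exists>c. c \<in> carrier_vec d \<and> B *\<^sub>v c = x" by blast
    thus ?thesis unfolding crd_def by (rule someI_ex)
  qed
  define \<sigma> where "\<sigma> m = mat d d (\<lambda>(i,j). crd (\<rho> m *\<^sub>v col B j) $ i)" for m
  have sc: "\<sigma> m \<in> carrier_mat d d" for m unfolding \<sigma>_def by auto
  have colS: "col B j \<in> S" if "j < d" for j
  proof -
    have "col B j = B *\<^sub>v unit_vec d j" using mult_unit_vec_col[OF B that] by simp
    thus ?thesis using inS[of "unit_vec d j"] by simp
  qed
  have comm: "\<rho> m * B = B * \<sigma> m" for m
  proof (rule mat_col_eqI)
    fix j assume "j < dim_col (B * \<sigma> m)"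
    hence j: "j < d" using B sc[of m] by auto
    have cm: "crd (\<rho> m *\<^sub>v col B j) \<in> carrier_vec d \<and> B *\<^sub>v crd (\<rho> m *\<^sub>v col B j) = \<rho> m *\<^sub>v col B j"
      using crd inv colS j by blast
    have cs: "col (\<sigma> m) j = crd (\<rho> m *\<^sub>v col B j)"
      using cm j unfolding \<sigma>_def by (intro eq_vecI) auto
    show "col (\<rho> m * B) j = col (B * \<sigma> m) j"
      using col_mult2[OF rhoc B j] col_mult2[OF B sc j] cs cm by simp
  qed (use B sc[of m] rhoc[of m] in auto)
  have rho1: "\<rho> 1 = 1\<^sub>m D" and rhom: "\<And>a b. \<rho> (a * b) = \<rho> a * \<rho> b"
    using rep unfolding is_rep_def by auto
  have s1: "\<sigma> 1 = 1\<^sub>m d"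
  proof (rule inj_cancel[OF B inj sc one_carrier_mat])
    have "B * \<sigma> 1 = \<rho> 1 * B" using comm[of 1] by simp
    also have "\<dots> = B" using rho1 B by simp
    also have "\<dots> = B * 1\<^sub>m d" using B by simp
    finally show "B * \<sigma> 1 = B * 1\<^sub>m d" .
  qed
  have smult: "\<sigma> (a * b) = \<sigma> a * \<sigma> b" for a b
  proof (rule inj_cancel[OF B inj sc mult_carrier_mat[OF sc sc]])
    have "B * \<sigma> (a * b) = \<rho> a * \<rho> b * B" using comm[of "a*b"] rhom[of a b] by simp
    also have "\<dots> = \<rho> a * (\<rho> b * B)" by (rule assoc_mult_mat[OF rhoc rhoc B])
    also have "\<dots> = \<rho> a * (B * \<sigma> b)" using comm[of b] by simp
    also have "\<dots> = \<rho> a * B * \<sigma> b" by (rule assoc_mult_mat[OF rhoc B sc, symmetric])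
    also have "\<dots> = B * \<sigma> a * \<sigma> b" using comm[of a] by simp
    also have "\<dots> = B * (\<sigma> a * \<sigma> b)" by (rule assoc_mult_mat[OF B sc sc])
    finally show "B * \<sigma> (a * b) = B * (\<sigma> a * \<sigma> b)" .
  qed
  have "is_rep d \<sigma>" unfolding is_rep_def using sc s1 smult by blast
  show ?thesis by (rule that[OF B \<open>is_rep d \<sigma>\<close> comm inS span inj])
qed



definition Pm :: "nat \<Rightarrow> 'k::field mat" where
  "Pm n = mat (2*n+1) (2*n+1) (\<lambda>(r,s). if s < n \<and> r = n + s then 1 else 0)"
definition Qm :: "nat \<Rightarrow> 'k::field mat" where
  "Qm n = mat (2*n+1) (2*n+1) (\<lambda>(r,s). if s < n \<and> r = n + s + 1 then 1 else 0)"

lemma mult_entry: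
  assumes "A \<in> carrier_mat K K" "B \<in> carrier_mat K K" "r < K" "s < K"
  shows "(A * B) $$ (r,s) = (\<Sum>t\<in>{0..<K}. A $$ (r,t) * B $$ (t,s))"
  using assms by (simp add: index_mult_mat scalar_prod_def)

lemma delta_sum:
  assumes "\<And>t. t < K \<Longrightarrow> f t = (if t = a then g else 0)"
  shows "(\<Sum>t\<in>{0..<(K::nat)}. f t) = (if a < K then g else (0::'a::comm_monoid_add))"
proof -
  have "(\<Sum>t\<in>{0..<K}. f t) = (\<Sum>t\<in>{0..<K}. (if t = a then g else 0))"
    using assms by (intro sum.cong) auto
  also have "\<dots> = (if a < K then g else 0)"
    using sum.delta[of "{0..<K}" a "\<lambda>_. g"] by simp
  finally show ?thesis .
qed

lemma TP_entry:
  fixes T :: "'k::field mat"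
  assumes K: "K = 2*n+1" and T: "T \<in> carrier_mat K K" and r: "r < K" and s: "s < K"
  shows "(T * Pm n) $$ (r,s) = (if s < n then T $$ (r, n+s) else 0)"
proof -
  have P: "Pm n \<in> carrier_mat K K" unfolding Pm_def K by auto
  show ?thesis unfolding mult_entry[OF T P r s]
    by (rule trans[OF delta_sum[where a = "n+s" and g = "if s < n then T $$ (r, n+s) else 0"]])
       (use r s in \<open>auto simp: Pm_def K\<close>)
qed

lemma PT_entry:
  fixes T :: "'k::field mat"
  assumes K: "K = 2*n+1" and T: "T \<in> carrier_mat K K" and r: "r < K" and s: "s < K"
  shows "(Pm n * T) $$ (r,s) = (if n \<le> r \<and> r < 2*n then T $$ (r - n, s) else 0)"
proof -
  have P: "Pm n \<in> carrier_mat K K" unfolding Pm_def K by auto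
  show ?thesis unfolding mult_entry[OF P T r s]
    by (rule trans[OF delta_sum[where a = "r - n" and g = "if n \<le> r \<and> r < 2*n then T $$ (r - n, s) else 0"]])
       (use r s in \<open>auto simp: Pm_def K\<close>)
qed

lemma TQ_entry:
  fixes T :: "'k::field mat"
  assumes K: "K = 2*n+1" and T: "T \<in> carrier_mat K K" and r: "r < K" and s: "s < K"
  shows "(T * Qm n) $$ (r,s) = (if s < n then T $$ (r, n+s+1) else 0)"
proof -
  have P: "Qm n \<in> carrier_mat K K" unfolding Qm_def K by auto
  show ?thesis unfolding mult_entry[OF T P r s]
    by (rule trans[OF delta_sum[where a = "n+s+1" and g = "if s < n then T $$ (r, n+s+1) else 0"]])
       (use r s in \<open>auto simp: Qm_def K\<close>)
qed

lemma QT_entry: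
  fixes T :: "'k::field mat"
  assumes K: "K = 2*n+1" and T: "T \<in> carrier_mat K K" and r: "r < K" and s: "s < K"
  shows "(Qm n * T) $$ (r,s) = (if n + 1 \<le> r then T $$ (r - n - 1, s) else 0)"
proof -
  have P: "Qm n \<in> carrier_mat K K" unfolding Qm_def K by auto
  show ?thesis unfolding mult_entry[OF P T r s]
    by (rule trans[OF delta_sum[where a = "r - n - 1" and g = "if n + 1 \<le> r then T $$ (r - n - 1, s) else 0"]])
       (use r s in \<open>auto simp: Qm_def K\<close>)
qed

lemma kron_comm:
  fixes T :: "'k::field mat"
  assumes K: "K = 2*n+1" and T: "T \<in> carrier_mat K K"
    and cP: "T * Pm n = Pm n * T" and cQ: "T * Qm n = Qm n * T" and idem: "T * T = T"
  shows "T = 0\<^sub>m K K \<or> T = 1\<^sub>m K"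
proof -
  define t where "t r s = T $$ (r,s)" for r s
  have E1: "t r (n+s) = (if n \<le> r \<and> r < 2*n then t (r - n) s else 0)" if "r < K" "s < n" for r s
    using arg_cong[OF cP, of "\<lambda>M. M $$ (r,s)"] TP_entry[OF K T, of r s] PT_entry[OF K T, of r s] that K
    unfolding t_def by auto
  have E2: "t i s = 0" if "i < n" "n \<le> s" "s < K" for i s
    using arg_cong[OF cP, of "\<lambda>M. M $$ (n+i,s)"] TP_entry[OF K T, of "n+i" s] PT_entry[OF K T, of "n+i" s] that K
    unfolding t_def by auto
  have E3: "t r (n+s+1) = (if n + 1 \<le> r then t (r - n - 1) s else 0)" if "r < K" "s < n" for r s
    using arg_cong[OF cQ, of "\<lambda>M. M $$ (r,s)"] TQ_entry[OF K T, of r s] QT_entry[OF K T, of r s] that K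
    unfolding t_def by auto
  define Z where "Z a b = t (n+a) (n+b)" for a b
  have Zs: "Z (a+1) (b+1) = Z a b" if "a < n" "b < n" for a b
  proof -
    have "Z (a+1) (b+1) = t a b" unfolding Z_def using E3[of "n+a+1" b] that K by (simp add: add.assoc)
    also have "\<dots> = Z a b" unfolding Z_def using E1[of "n+a" b] that K by simp
    finally show ?thesis .
  qed
  have Zn: "Z n b = 0" if "b < n" for b unfolding Z_def using E1[of "n+n" b] that K by simp
  have Z0: "Z 0 (b+1) = 0" if "b < n" for b unfolding Z_def using E3[of n b] that K by (simp add: add.assoc)
  have Zup: "Z a b = Z 0 (b - a)" if "a \<le> b" "b \<le> n" for a b
    using that
  proof (induction a arbitrary: b)
    case 0 thus ?case by simp
  next
    case (Suc a)
    then obtain b' where b': "b = b' + 1" by (cases b) auto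
    have "Z (Suc a) b = Z a b'" using Zs[of a b'] Suc.prems b' by simp
    also have "\<dots> = Z 0 (b' - a)" using Suc.IH[of b'] Suc.prems b' by simp
    finally show ?case using b' by simp
  qed
  have Zdown: "Z a b = Z (a+j) (b+j)" if "a + j \<le> n" "b < a" for a b j
    using that
  proof (induction j)
    case 0 thus ?case by simp
  next
    case (Suc j)
    have "Z (a + Suc j) (b + Suc j) = Z (a+j) (b+j)" using Zs[of "a+j" "b+j"] Suc.prems by simp
    thus ?case using Suc by simp
  qed
  define c where "c = Z 0 0"
  have Zd: "Z a b = (if a = b then c else 0)" if ab: "a \<le> n" "b \<le> n" for a b
  proof (cases "a \<le> b")
    case True
    have Zab: "Z a b = Z 0 (b - a)" by (rule Zup[OF True ab(2)])
    show ?thesis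
    proof (cases "a = b")
      case True thus ?thesis using Zab unfolding c_def by simp
    next
      case False
      define k where "k = b - a - 1"
      have k: "b - a = k + 1" "k < n" unfolding k_def using False \<open>a \<le> b\<close> ab by auto
      have "Z 0 (k + 1) = 0" by (rule Z0[OF k(2)])
      thus ?thesis using Zab k(1) False by simp
    qed
  next
    case False
    have "Z a b = Z (a + (n - a)) (b + (n - a))" by (rule Zdown) (use False ab in auto)
    also have "a + (n - a) = n" using ab by simp
    also have "Z n (b + (n - a)) = 0" by (rule Zn) (use False ab in auto)
    finally show ?thesis using False by simp
  qed
  have Xd: "t a b = (if a = b then c else 0)" if "a < n" "b < n" for a b
  proof -
    have "t a b = Z a b" unfolding Z_def using E1[of "n+a" b] that K by simp
    thus ?thesis using Zd[of a b] that by simp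
  qed
  have Wd: "t r s = (if r = s then c else 0)" if "n \<le> r" "r < K" "n \<le> s" "s < K" for r s
    using Zd[of "r - n" "s - n"] that K unfolding Z_def by auto
  have TT: "(T * T) $$ (r,s) = (\<Sum>u\<in>{0..<K}. t r u * t u s)" if "r < K" "s < K" for r s
    using mult_entry[OF T T that] unfolding t_def .
  have cc: "c * c = c"
  proof -
    have "c = t n n" using Wd[of n n] K by simp
    also have "\<dots> = (\<Sum>u\<in>{0..<K}. t n u * t u n)" using TT[of n n] idem K unfolding t_def by simp
    also have "\<dots> = (if n < K then c * c else 0)"
    proof (rule delta_sum)
      fix u assume u: "u < K"
      show "t n u * t u n = (if u = n then c * c else 0)"
      proof (cases "u < n")
        case True thus ?thesis using E2[of u n] u K by simp
      next
        case False thus ?thesis using Wd[of n u] Wd[of u n] u K by auto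
      qed
    qed
    finally show ?thesis using K by simp
  qed
  hence "c * (c - 1) = 0" by (simp add: algebra_simps)
  hence c01: "c = 0 \<or> c = 1" by simp
  have Y0: "t r s = 0" if "n \<le> r" "r < K" "s < n" for r s
  proof -
    have trs: "t r s = (\<Sum>u\<in>{0..<K}. t r u * t u s)" using TT[of r s] idem that K unfolding t_def by simp
    show ?thesis
    proof (cases "c = 0")
      case True
      have "(\<Sum>u\<in>{0..<K}. t r u * t u s) = (if 0 < K then 0 else 0)"
      proof (rule delta_sum)
        fix u assume u: "u < K"
        show "t r u * t u s = (if u = 0 then 0 else 0)"
        proof (cases "u < n")
          case True thus ?thesis using Xd[of u s] \<open>c = 0\<close> that by simp
        next
          case False thus ?thesis using Wd[of r u] \<open>c = 0\<close> that u by simp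
        qed
      qed
      thus ?thesis using trs by simp
    next
      case False
      hence c1: "c = 1" using c01 by simp
      have "(\<Sum>u\<in>{0..<K}. t r u * t u s) = (\<Sum>u\<in>{0..<K}. (if u = s then t r s else 0) + (if u = r then t r s else 0))"
      proof (rule sum.cong)
        fix u assume "u \<in> {0..<K}"
        hence u: "u < K" by simp
        show "t r u * t u s = (if u = s then t r s else 0) + (if u = r then t r s else 0)"
        proof (cases "u < n")
          case True thus ?thesis using Xd[of u s] c1 that by auto
        next
          case False thus ?thesis using Wd[of r u] c1 that u by auto
        qed
      qed simp
      also have "\<dots> = t r s + t r s" using that K by (simp add: sum.distrib sum.delta)
      finally have "t r s = t r s + t r s" using trs by (simp only:)
      thus ?thesis by (simp only: add_cancel_right_right)
    qed
  qed
  show ?thesis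
  proof (cases "c = 0")
    case True
    have "T = 0\<^sub>m K K"
    proof (rule eq_matI)
      fix r s assume "r < dim_row (0\<^sub>m K K :: 'k mat)" "s < dim_col (0\<^sub>m K K :: 'k mat)"
      hence r: "r < K" and s: "s < K" by auto
      have "t r s = 0"
        using Xd[of r s] Wd[of r s] E2[of r s] Y0[of r s] True r s by (cases "r < n"; cases "s < n") auto
      thus "T $$ (r,s) = 0\<^sub>m K K $$ (r,s)" using r s unfolding t_def by simp
    qed (use T in auto)
    thus ?thesis by simp
  next
    case False
    hence c1: "c = 1" using c01 by simp
    have "T = 1\<^sub>m K"
    proof (rule eq_matI)
      fix r s assume "r < dim_row (1\<^sub>m K :: 'k mat)" "s < dim_col (1\<^sub>m K :: 'k mat)"
      hence r: "r < K" and s: "s < K" by auto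
      have "t r s = (if r = s then 1 else 0)"
        using Xd[of r s] Wd[of r s] E2[of r s] Y0[of r s] c1 r s by (cases "r < n"; cases "s < n") auto
      thus "T $$ (r,s) = 1\<^sub>m K $$ (r,s)" using r s unfolding t_def by simp
    qed (use T in auto)
    thus ?thesis by simp
  qed
qed



context
  fixes e :: "'m::{monoid_mult,finite}"
  assumes idem: "e * e = e"
begin

lemma corner_mem: "x \<in> corner e \<longleftrightarrow> e * x = x \<and> x * e = x"
proof
  assume "x \<in> corner e"
  then obtain m where "x = e * m * e" unfolding corner_def by auto
  thus "e * x = x \<and> x * e = x" using idem by (simp add: mult.assoc[symmetric]) (simp add: mult.assoc)
next
  assume "e * x = x \<and> x * e = x"
  hence "x = e * x * e" by simp
  thus "x \<in> corner e" unfolding corner_def by auto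
qed

lemma corner_mult: "x \<in> corner e \<Longrightarrow> y \<in> corner e \<Longrightarrow> x * y \<in> corner e"
  unfolding corner_mem by (metis mult.assoc)

lemma e_corner: "e \<in> corner e" unfolding corner_mem using idem by simp

lemma e_unit: "corner_unit e e" unfolding corner_unit_def using e_corner idem by auto

lemma unit_mult: "corner_unit e u \<Longrightarrow> corner_unit e v \<Longrightarrow> corner_unit e (u * v)"
proof -
  assume "corner_unit e u" "corner_unit e v"
  then obtain u' v' where u: "u \<in> corner e" "u' \<in> corner e" "u * u' = e" "u' * u = e"
    and v: "v \<in> corner e" "v' \<in> corner e" "v * v' = e" "v' * v = e"
    unfolding corner_unit_def by auto
  have "u * v * (v' * u') = e" using u v corner_mem
    by (metis mult.assoc)
  moreover have "v' * u' * (u * v) = e" using u v corner_mem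
    by (metis mult.assoc)
  ultimately show ?thesis unfolding corner_unit_def using u v corner_mult by blast
qed

lemma finite_inv:
  assumes x: "x \<in> corner e" and y: "y \<in> corner e" and xy: "x * y = e"
  shows "y * x = e"
proof -
  have inj: "inj_on (\<lambda>t. y * t) (corner e)"
  proof (rule inj_onI)
    fix s t assume s: "s \<in> corner e" and t: "t \<in> corner e" and "y * s = y * t"
    hence "x * y * s = x * y * t" by (simp add: mult.assoc)
    thus "s = t" using xy s t corner_mem by simp
  qed
  have "(\<lambda>t. y * t) ` corner e \<subseteq> corner e" using y corner_mult by auto
  hence "(\<lambda>t. y * t) ` corner e = corner e"
    using inj by (simp add: endo_inj_surj)
  then obtain w where w: "w \<in> corner e" "y * w = e" using e_corner by (metis imageE)
  have "x = x * y * w" using w corner_mem x by (simp add: mult.assoc)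
  hence "x = w" using xy w corner_mem by simp
  thus ?thesis using w by simp
qed

lemma unit_factor:
  assumes x: "x \<in> corner e" and y: "y \<in> corner e" and u: "corner_unit e (x * y)"
  shows "corner_unit e x \<and> corner_unit e y"
proof -
  obtain w where w: "w \<in> corner e" "x * y * w = e" "w * (x * y) = e"
    using u unfolding corner_unit_def by auto
  have yw: "y * w \<in> corner e" "w * x \<in> corner e" using corner_mult x y w by auto
  have "x * (y * w) = e" using w by (simp add: mult.assoc)
  hence "corner_unit e x" using finite_inv[OF x yw(1)] x yw unfolding corner_unit_def by blast
  moreover have "(w * x) * y = e" using w by (simp add: mult.assoc)
  hence "corner_unit e y" using finite_inv[OF yw(2) y] y yw unfolding corner_unit_def by blast
  ultimately show ?thesis by blast
qed

lemma unit_inv: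
  assumes "corner_unit e u" obtains u' where "corner_unit e u'" "u * u' = e" "u' * u = e"
  using assms unfolding corner_unit_def by blast

lemma assoc_corner: "corner_associates e x p \<Longrightarrow> p \<in> corner e \<Longrightarrow> x \<in> corner e"
  unfolding corner_associates_def corner_unit_def using corner_mult by blast

lemma assoc_sym: assumes "corner_associates e x p" "p \<in> corner e" shows "corner_associates e p x"
proof -
  obtain u v where uv: "corner_unit e u" "corner_unit e v" "x = u * p * v"
    using assms unfolding corner_associates_def by blast
  obtain u' where u': "corner_unit e u'" "u * u' = e" "u' * u = e" using unit_inv[OF uv(1)] by blast
  obtain v' where v': "corner_unit e v'" "v * v' = e" "v' * v = e" using unit_inv[OF uv(2)] by blast
  have "u' * x * v' = (u' * u) * p * (v * v')" using uv by (simp add: mult.assoc)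
  also have "\<dots> = p" using u' v' assms(2) corner_mem by simp
  finally show ?thesis unfolding corner_associates_def using u' v' by metis
qed

lemma assoc_left:
  assumes u: "corner_unit e u" and y: "y \<in> corner e" and p: "p \<in> corner e"
  shows "corner_associates e (u * y) p \<longleftrightarrow> corner_associates e y p"
proof
  assume "corner_associates e y p"
  then obtain a b where ab: "corner_unit e a" "corner_unit e b" "y = a * p * b"
    unfolding corner_associates_def by blast
  have "u * y = (u * a) * p * b" using ab by (simp add: mult.assoc)
  thus "corner_associates e (u * y) p" unfolding corner_associates_def using unit_mult[OF u ab(1)] ab(2) by blast
next
  assume "corner_associates e (u * y) p"
  then obtain a b where ab: "corner_unit e a" "corner_unit e b" "u * y = a * p * b"
    unfolding corner_associates_def by blast
  obtain u' where u': "corner_unit e u'" "u * u' = e" "u' * u = e" using unit_inv[OF u] by blast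
  have "y = u' * (u * y)" using u' y corner_mem by (simp add: mult.assoc[symmetric])
  also have "\<dots> = (u' * a) * p * b" using ab by (simp add: mult.assoc)
  finally show "corner_associates e y p" unfolding corner_associates_def using unit_mult[OF u'(1) ab(1)] ab(2) by blast
qed

lemma assoc_right:
  assumes u: "corner_unit e u" and y: "y \<in> corner e" and p: "p \<in> corner e"
  shows "corner_associates e (y * u) p \<longleftrightarrow> corner_associates e y p"
proof
  assume "corner_associates e y p"
  then obtain a b where ab: "corner_unit e a" "corner_unit e b" "y = a * p * b"
    unfolding corner_associates_def by blast
  have "y * u = a * p * (b * u)" using ab by (simp add: mult.assoc)
  thus "corner_associates e (y * u) p" unfolding corner_associates_def using unit_mult[OF ab(2) u] ab(1) by blast
next
  assume "corner_associates e (y * u) p"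
  then obtain a b where ab: "corner_unit e a" "corner_unit e b" "y * u = a * p * b"
    unfolding corner_associates_def by blast
  obtain u' where u': "corner_unit e u'" "u * u' = e" "u' * u = e" using unit_inv[OF u] by blast
  have "y = (y * u) * u'" using u' y corner_mem by (simp add: mult.assoc)
  also have "\<dots> = a * p * (b * u')" using ab by (simp add: mult.assoc)
  finally show "corner_associates e y p" unfolding corner_associates_def using unit_mult[OF ab(2) u'(1)] ab(1) by blast
qed

lemma assoc_nonunit:
  assumes "corner_associates e x p" "p \<in> corner e" "\<not> corner_unit e p"
  shows "\<not> corner_unit e x"
proof
  assume x: "corner_unit e x"
  obtain u v where uv: "corner_unit e u" "corner_unit e v" "p = u * x * v"
    using assoc_sym[OF assms(1,2)] unfolding corner_associates_def by blast
  have "corner_unit e p" using uv x unit_mult by metis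
  thus False using assms(3) by simp
qed

lemma irred_prod:
  assumes p: "corner_irreducible e p" and x: "x \<in> corner e" and y: "y \<in> corner e"
    and nx: "\<not> corner_unit e x" and ny: "\<not> corner_unit e y"
  shows "\<not> corner_associates e (x * y) p"
proof
  assume "corner_associates e (x * y) p"
  then obtain u v where uv: "corner_unit e u" "corner_unit e v" "p = u * (x * y) * v"
    using assoc_sym p unfolding corner_associates_def corner_irreducible_def by (metis corner_mult x y)
  have uc: "u \<in> corner e" "v \<in> corner e" using uv unfolding corner_unit_def by auto
  have "p = (u * x) * (y * v)" using uv by (simp add: mult.assoc)
  hence "corner_unit e (u * x) \<or> corner_unit e (y * v)"
    using p corner_mult uc x y unfolding corner_irreducible_def by blast
  moreover have "\<not> corner_unit e (u * x)" using unit_factor[OF uc(1) x] nx by blast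
  moreover have "\<not> corner_unit e (y * v)" using unit_factor[OF y uc(2)] ny by blast
  ultimately show False by blast
qed

end



lemma invertible_obtain:
  fixes P :: "'k::field mat"
  assumes P: "P \<in> carrier_mat d d" and inv: "invertible_mat P"
  obtains Pi where "Pi \<in> carrier_mat d d" "P * Pi = 1\<^sub>m d" "Pi * P = 1\<^sub>m d"
proof -
  obtain B where B: "P * B = 1\<^sub>m (dim_row P)" "B * P = 1\<^sub>m (dim_row B)"
    using inv unfolding invertible_mat_def inverts_mat_def by blast
  have "dim_col B = d" using arg_cong[OF B(1), of dim_col] P by simp
  moreover have "dim_row B = d" using arg_cong[OF B(2), of dim_col] P by simp
  ultimately show ?thesis using that[of B] B P by auto
qed

lemma indec_crit:
  fixes \<sigma> :: "'m::monoid_mult \<Rightarrow> 'k::field mat"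
  assumes rep: "is_rep d \<sigma>" and d: "d > 0"
    and triv: "\<And>E. E \<in> carrier_mat d d \<Longrightarrow> E * E = E \<Longrightarrow> (\<And>m. E * \<sigma> m = \<sigma> m * E)
       \<Longrightarrow> E = 0\<^sub>m d d \<or> E = 1\<^sub>m d"
  shows "indecomposable_rep d \<sigma>"
  unfolding indecomposable_rep_def
proof (intro conjI rep d notI)
  assume "\<exists>n1 \<rho>1 n2 \<rho>2. n1 > 0 \<and> n2 > 0 \<and> is_rep n1 \<rho>1 \<and> is_rep n2 \<rho>2 \<and>
          rep_iso d \<sigma> (n1 + n2) (rep_sum n1 \<rho>1 n2 \<rho>2)"
  then obtain n1 n2 and \<rho>1 \<rho>2 :: "'m \<Rightarrow> 'k mat" where n: "n1 > 0" "n2 > 0"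
    and r1: "is_rep n1 \<rho>1" and r2: "is_rep n2 \<rho>2"
    and iso: "rep_iso d \<sigma> (n1 + n2) (rep_sum n1 \<rho>1 n2 \<rho>2)" by blast
  define R where "R = rep_sum n1 \<rho>1 n2 \<rho>2"
  from iso obtain P where dd: "d = n1 + n2" and P: "P \<in> carrier_mat d d" and Pinv: "invertible_mat P"
    and PR: "\<And>m. P * \<sigma> m = R m * P"
    unfolding rep_iso_def R_def by blast
  obtain Pi where Pi: "Pi \<in> carrier_mat d d" "P * Pi = 1\<^sub>m d" "Pi * P = 1\<^sub>m d"
    using invertible_obtain[OF P Pinv] by blast
  have c1: "\<rho>1 m \<in> carrier_mat n1 n1" for m using r1 unfolding is_rep_def by auto
  have c2: "\<rho>2 m \<in> carrier_mat n2 n2" for m using r2 unfolding is_rep_def by auto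
  have sc: "\<sigma> m \<in> carrier_mat d d" for m using rep unfolding is_rep_def by auto
  define \<Delta> :: "'k mat" where "\<Delta> = four_block_mat (1\<^sub>m n1) (0\<^sub>m n1 n2) (0\<^sub>m n2 n1) (0\<^sub>m n2 n2)"
  have Dc: "\<Delta> \<in> carrier_mat d d" unfolding \<Delta>_def dd by auto
  have Rc: "R m \<in> carrier_mat d d" for m unfolding R_def rep_sum_def dd using c1 c2 by auto
  have DD: "\<Delta> * \<Delta> = \<Delta>" unfolding \<Delta>_def
    by (subst mult_four_block_mat) auto
  have DR: "\<Delta> * R m = R m * \<Delta>" for m
  proof -
    have a: "\<rho>1 m \<in> carrier_mat n1 n1" "\<rho>2 m \<in> carrier_mat n2 n2" using c1 c2 by auto
    have "\<Delta> * R m = four_block_mat (\<rho>1 m) (0\<^sub>m n1 n2) (0\<^sub>m n2 n1) (0\<^sub>m n2 n2)"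
      unfolding \<Delta>_def R_def rep_sum_def
      using mult_four_block_mat[OF one_carrier_mat zero_carrier_mat zero_carrier_mat zero_carrier_mat
          a(1) zero_carrier_mat zero_carrier_mat a(2)] a by simp
    also have "\<dots> = R m * \<Delta>"
      unfolding \<Delta>_def R_def rep_sum_def
      using mult_four_block_mat[OF a(1) zero_carrier_mat zero_carrier_mat a(2)
          one_carrier_mat zero_carrier_mat zero_carrier_mat zero_carrier_mat] a by simp
    finally show ?thesis .
  qed
  define E where "E = Pi * \<Delta> * P"
  have Ec: "E \<in> carrier_mat d d" unfolding E_def using Pi Dc P by auto
  have "E * E = Pi * \<Delta> * (P * Pi) * \<Delta> * P" unfolding E_def
    using Pi(1) Dc P by (simp add: assoc_mult_mat[of _ d d _ d _ d])
  also have "\<dots> = Pi * \<Delta> * 1\<^sub>m d * \<Delta> * P" using Pi(2) by simp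
  also have "\<dots> = Pi * (\<Delta> * \<Delta>) * P" using Pi Dc P
    by (simp add: assoc_mult_mat[of _ d d _ d _ d])
  also have "\<dots> = E" unfolding DD E_def ..
  finally have EE: "E * E = E" .
  have sPi: "\<sigma> m * Pi = Pi * R m" for m
  proof -
    have "Pi * R m = Pi * (R m * P) * Pi" using Pi P Rc[of m]
      by (simp add: assoc_mult_mat[of _ d d _ d _ d])
    also have "\<dots> = Pi * P * \<sigma> m * Pi" unfolding PR[symmetric] using Pi(1) P sc[of m]
      by (simp add: assoc_mult_mat[of _ d d _ d _ d])
    also have "\<dots> = 1\<^sub>m d * \<sigma> m * Pi" by (simp only: Pi(3))
    also have "\<dots> = \<sigma> m * Pi" using sc[of m] by simp
    finally show ?thesis by simp
  qed
  have Ecomm: "E * \<sigma> m = \<sigma> m * E" for m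
  proof -
    have "E * \<sigma> m = Pi * \<Delta> * (P * \<sigma> m)" unfolding E_def using Pi Dc P sc[of m]
      by (simp add: assoc_mult_mat[of _ d d _ d _ d])
    also have "\<dots> = Pi * (\<Delta> * R m) * P" unfolding PR using Pi Dc P Rc[of m]
      by (simp add: assoc_mult_mat[of _ d d _ d _ d])
    also have "\<dots> = (Pi * R m) * \<Delta> * P" unfolding DR using Pi Dc P Rc[of m]
      by (simp add: assoc_mult_mat[of _ d d _ d _ d])
    also have "\<dots> = \<sigma> m * E" unfolding sPi[symmetric] E_def using Pi Dc P sc[of m]
      by (simp add: assoc_mult_mat[of _ d d _ d _ d])
    finally show ?thesis .
  qed
  have "P * E * Pi = (P * Pi) * \<Delta> * (P * Pi)" unfolding E_def using Pi(1) Dc P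
    by (simp add: assoc_mult_mat[of _ d d _ d _ d])
  hence bk: "\<Delta> = P * E * Pi" using Pi(2) Dc by simp
  from triv[OF Ec EE Ecomm] show False
  proof
    assume "E = 0\<^sub>m d d"
    hence "\<Delta> = 0\<^sub>m d d" using bk P Pi by simp
    hence "\<Delta> $$ (0,0) = 0" using d by simp
    moreover have "\<Delta> $$ (0,0) = 1" unfolding \<Delta>_def using n by simp
    ultimately show False by simp
  next
    assume "E = 1\<^sub>m d"
    hence "\<Delta> = 1\<^sub>m d" using bk P Pi by simp
    hence "\<Delta> $$ (n1,n1) = 1" using n dd by simp
    moreover have "\<Delta> $$ (n1,n1) = 0" unfolding \<Delta>_def using n by simp
    ultimately show False by simp
  qed
qed

lemma inf_from_unbounded:
  assumes "\<And>N. \<exists>d (\<sigma> :: 'm::monoid_mult \<Rightarrow> 'k::field mat). d \<ge> N \<and> indecomposable_rep d \<sigma>"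
  shows "infinite_rep_type TYPE('m) TYPE('k)"
  unfolding infinite_rep_type_def
proof
  assume "\<exists>S :: (nat \<times> ('m \<Rightarrow> 'k mat)) set. finite S \<and>
          (\<forall>n \<rho>. indecomposable_rep n \<rho> \<longrightarrow> (\<exists>(n', \<sigma>) \<in> S. rep_iso n \<rho> n' \<sigma>))"
  then obtain S :: "(nat \<times> ('m \<Rightarrow> 'k mat)) set" where S: "finite S"
    and cov: "\<And>n \<rho>. indecomposable_rep n \<rho> \<Longrightarrow> (\<exists>(n', \<sigma>) \<in> S. rep_iso n \<rho> n' \<sigma>)" by blast
  define N where "N = Suc (Max (insert 0 (fst ` S)))"
  obtain d and \<sigma> :: "'m \<Rightarrow> 'k mat" where d: "d \<ge> N" and ind: "indecomposable_rep d \<sigma>"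
    using assms by blast
  obtain n' \<sigma>' where "(n', \<sigma>') \<in> S" "rep_iso d \<sigma> n' \<sigma>'" using cov[OF ind] by blast
  hence "d \<in> fst ` S" unfolding rep_iso_def by force
  hence "d \<le> Max (insert 0 (fst ` S))" using S by simp
  thus False using d unfolding N_def by simp
qed



definition ix :: "'m::finite \<Rightarrow> nat" where
  "ix = (SOME f. bij_betw f (UNIV::'m set) {0..<card (UNIV::'m set)})"

lemma ix_bij: "bij_betw (ix :: 'm::finite \<Rightarrow> nat) UNIV {0..<card (UNIV::'m set)}"
  unfolding ix_def using ex_bij_betw_finite_nat[OF finite_UNIV[where 'a='m]] by (rule someI_ex)

definition ixi :: "nat \<Rightarrow> 'm::finite" where "ixi = inv_into UNIV ix"

lemma ix_lt: "ix (x::'m::finite) < card (UNIV::'m set)"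
  using ix_bij[where 'm='m] unfolding bij_betw_def by auto
lemma ixi_ix[simp]: "ixi (ix (x::'m::finite)) = x"
  unfolding ixi_def using ix_bij[where 'm='m] unfolding bij_betw_def by (simp add: inv_into_f_f)
lemma ix_ixi: "i < card (UNIV::'m::finite set) \<Longrightarrow> ix (ixi i :: 'm) = i"
  unfolding ixi_def using ix_bij[where 'm='m] unfolding bij_betw_def by (simp add: f_inv_into_f)

lemma idx_lt: assumes "a < C" "i < (K::nat)" shows "a * K + i < C * K"
proof -
  have "a * K + i < a * K + K" using assms by simp
  also have "\<dots> = (a + 1) * K" by simp
  also have "\<dots> \<le> C * K" using assms by (intro mult_right_mono) auto
  finally show ?thesis .
qed

lemma idx_div: "i < (K::nat) \<Longrightarrow> (a * K + i) div K = a" by simp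
lemma idx_mod: "i < (K::nat) \<Longrightarrow> (a * K + i) mod K = i" by simp

lemma mat_vec_zero: "(A :: 'a::comm_ring_1 mat) \<in> carrier_mat nr nc \<Longrightarrow> A *\<^sub>v 0\<^sub>v nc = 0\<^sub>v nr"
  by (intro eq_vecI) (auto simp: scalar_prod_def)

lemma zero_mat_vec: "(v :: 'a::comm_ring_1 vec) \<in> carrier_vec nc \<Longrightarrow> 0\<^sub>m nr nc *\<^sub>v v = 0\<^sub>v nr"
  by (intro eq_vecI) (auto simp: scalar_prod_def)

definition getv :: "nat \<Rightarrow> 'k vec \<Rightarrow> 'm::finite \<Rightarrow> 'k vec" where
  "getv K h a = vec K (\<lambda>i. h $ (ix a * K + i))"

lemma getv_carrier[simp]: "getv K h a \<in> carrier_vec K" unfolding getv_def by simp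

lemma vec_eq_by_get:
  fixes h h' :: "'k vec"
  assumes h: "h \<in> carrier_vec (card (UNIV::'m::finite set) * K)" and h': "h' \<in> carrier_vec (card (UNIV::'m set) * K)"
    and eq: "\<And>b::'m. getv K h b = getv K h' b"
  shows "h = h'"
proof (rule eq_vecI)
  fix r assume "r < dim_vec h'"
  hence r: "r < card (UNIV::'m set) * K" using h' by simp
  hence K: "K > 0" by (cases K) auto
  have rd: "r div K < card (UNIV::'m set)" using r by (simp add: less_mult_imp_div_less)
  have rm: "r mod K < K" using K by simp
  define b :: 'm where "b = ixi (r div K)"
  have ixb: "ix b * K + r mod K = r" unfolding b_def using ix_ixi[OF rd] by simp
  have "getv K h b $ (r mod K) = getv K h' b $ (r mod K)" using eq by simp
  thus "h $ r = h' $ r" unfolding getv_def using rm ixb by simp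
qed (use h h' in simp)

lemma mat_eq_by_vec:
  fixes A B :: "'k::comm_ring_1 mat"
  assumes A: "A \<in> carrier_mat R C" and B: "B \<in> carrier_mat R C"
    and eq: "\<And>v. v \<in> carrier_vec C \<Longrightarrow> A *\<^sub>v v = B *\<^sub>v v"
  shows "A = B"
proof (rule mat_col_eqI)
  fix j assume "j < dim_col B" hence j: "j < C" using B by simp
  have "col A j = A *\<^sub>v unit_vec C j" using mult_unit_vec_col[OF A j] by simp
  also have "\<dots> = B *\<^sub>v unit_vec C j" using eq by simp
  also have "\<dots> = col B j" using mult_unit_vec_col[OF B j] by simp
  finally show "col A j = col B j" .
qed (use A B in auto)

definition selm :: "nat \<Rightarrow> nat \<Rightarrow> (nat \<Rightarrow> nat) \<Rightarrow> 'k::field mat" where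
  "selm R C f = mat R C (\<lambda>(r,s). if s = f r then 1 else 0)"

lemma selm_vec:
  assumes h: "h \<in> carrier_vec C" and r: "r < R" and f: "f r < C"
  shows "(selm R C f *\<^sub>v h) $ r = h $ f r"
proof -
  have "(selm R C f *\<^sub>v h) $ r = row (selm R C f) r \<bullet> h" using r unfolding selm_def by simp
  also have "\<dots> = (\<Sum>s\<in>{0..<C}. row (selm R C f) r $ s * h $ s)" using h unfolding scalar_prod_def by simp
  also have "\<dots> = (\<Sum>s\<in>{0..<C}. (if s = f r then h $ s else 0))"
    by (rule sum.cong) (use r in \<open>auto simp: selm_def\<close>)
  also have "\<dots> = h $ f r" using f sum.delta[of "{0..<C}" "f r" "\<lambda>s. h $ s"] by simp
  finally show ?thesis .
qed

definition rhoF :: "nat \<Rightarrow> 'm::{finite,monoid_mult} \<Rightarrow> 'k::field mat" where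
  "rhoF K m = selm (card (UNIV::'m set) * K) (card (UNIV::'m set) * K) (\<lambda>r. ix (ixi (r div K) * m) * K + r mod K)"

lemma rhoF_carrier: "rhoF K (m::'m::{finite,monoid_mult}) \<in> carrier_mat (card (UNIV::'m set) * K) (card (UNIV::'m set) * K)"
  unfolding rhoF_def selm_def by simp

lemma getv_rhoF:
  fixes h :: "'k::field vec" and m b :: "'m::{finite,monoid_mult}"
  assumes h: "h \<in> carrier_vec (card (UNIV::'m set) * K)"
  shows "getv K (rhoF K m *\<^sub>v h) b = getv K h (b * m)"
proof (rule eq_vecI)
  fix i assume "i < dim_vec (getv K h (b * m))"
  hence i: "i < K" unfolding getv_def by simp
  have r: "ix b * K + i < card (UNIV::'m set) * K" using idx_lt[OF ix_lt i] .
  have d: "(ix b * K + i) div K = ix b" "(ix b * K + i) mod K = i" using i by auto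
  have t: "ix (b * m) * K + i < card (UNIV::'m set) * K" using idx_lt[OF ix_lt i] .
  show "getv K (rhoF K m *\<^sub>v h) b $ i = getv K h (b * m) $ i"
    unfolding getv_def rhoF_def using i selm_vec[OF h r] d t by simp
qed (simp add: getv_def)

lemma rhoF_rep: "is_rep (card (UNIV::'m::{finite,monoid_mult} set) * K) (rhoF K :: 'm \<Rightarrow> 'k::field mat)"
  unfolding is_rep_def
proof (intro conjI allI)
  let ?D = "card (UNIV::'m set) * K"
  show "rhoF K m \<in> carrier_mat ?D ?D" for m :: 'm by (rule rhoF_carrier)
  show "(rhoF K (1::'m) :: 'k mat) = 1\<^sub>m ?D"
  proof (rule mat_eq_by_vec[OF rhoF_carrier one_carrier_mat])
    fix v :: "'k vec" assume v: "v \<in> carrier_vec ?D"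
    have c1: "(rhoF K (1::'m) :: 'k mat) \<in> carrier_mat ?D ?D" by (rule rhoF_carrier)
    show "rhoF K (1::'m) *\<^sub>v v = 1\<^sub>m ?D *\<^sub>v v"
      by (rule vec_eq_by_get[where 'm='m and K=K]) (use v c1 in \<open>auto simp: getv_rhoF\<close>)
  qed
  fix a b :: 'm
  show "(rhoF K (a * b) :: 'k mat) = rhoF K a * rhoF K b"
  proof (rule mat_eq_by_vec[OF rhoF_carrier mult_carrier_mat[OF rhoF_carrier rhoF_carrier]])
    fix v :: "'k vec" assume v: "v \<in> carrier_vec ?D"
    have "rhoF K a * rhoF K b *\<^sub>v v = rhoF K a *\<^sub>v (rhoF K b *\<^sub>v v)"
      by (rule assoc_mult_mat_vec[OF rhoF_carrier rhoF_carrier v])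
    also have "\<dots> = rhoF K (a * b) *\<^sub>v v"
    proof -
      have ca: "(rhoF K a :: 'k mat) \<in> carrier_mat ?D ?D" and cb: "(rhoF K b :: 'k mat) \<in> carrier_mat ?D ?D"
        and cab: "(rhoF K (a*b) :: 'k mat) \<in> carrier_mat ?D ?D" by (rule rhoF_carrier)+
      have cbv: "rhoF K b *\<^sub>v v \<in> carrier_vec ?D" using cb v by simp
      show ?thesis
        by (rule vec_eq_by_get[where 'm='m and K=K])
           (use v ca cb cab cbv in \<open>auto simp: getv_rhoF mult.assoc\<close>)
    qed
    finally show "rhoF K (a * b) *\<^sub>v v = rhoF K a * rhoF K b *\<^sub>v v" by simp
  qed
qed

definition rhoV :: "'m::monoid_mult \<Rightarrow> 'm \<Rightarrow> 'm \<Rightarrow> nat \<Rightarrow> 'm \<Rightarrow> 'k::field mat" where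
  "rhoV e p q n x = (if corner_unit e x then 1\<^sub>m (2*n+1)
     else if corner_associates e x p then Pm n
     else if corner_associates e x q then Qm n else 0\<^sub>m (2*n+1) (2*n+1))"

lemma Pm_carrier: "Pm n \<in> carrier_mat (2*n+1) (2*n+1)" unfolding Pm_def by simp
lemma Qm_carrier: "Qm n \<in> carrier_mat (2*n+1) (2*n+1)" unfolding Qm_def by simp

lemma rhoV_carrier: "rhoV e p q n x \<in> carrier_mat (2*n+1) (2*n+1)"
  unfolding rhoV_def using Pm_carrier Qm_carrier by auto

lemma PQ_zero:
  assumes "X \<in> {Pm n, Qm n :: 'k::field mat}" "Y \<in> {Pm n, Qm n :: 'k mat}"
  shows "X * Y = 0\<^sub>m (2*n+1) (2*n+1)"
proof -
  have Xc: "X \<in> carrier_mat (2*n+1) (2*n+1)" and Yc: "Y \<in> carrier_mat (2*n+1) (2*n+1)"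
    using assms Pm_carrier Qm_carrier by auto
  have X0: "X $$ (r,t) = 0" if "r < 2*n+1" "t < 2*n+1" "\<not> t < n" for r t
    using assms(1) that unfolding Pm_def Qm_def by auto
  have Y0: "Y $$ (t,s) = 0" if "t < 2*n+1" "s < 2*n+1" "t < n" for t s
    using assms(2) that unfolding Pm_def Qm_def by auto
  show ?thesis
  proof (rule eq_matI)
    fix r s assume "r < dim_row (0\<^sub>m (2*n+1) (2*n+1) :: 'k mat)" "s < dim_col (0\<^sub>m (2*n+1) (2*n+1) :: 'k mat)"
    hence r: "r < 2*n+1" and s: "s < 2*n+1" by auto
    have "(X * Y) $$ (r,s) = (\<Sum>t\<in>{0..<2*n+1}. X $$ (r,t) * Y $$ (t,s))"
      by (rule mult_entry[OF Xc Yc r s])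
    also have "\<dots> = 0"
    proof (rule sum.neutral, intro ballI)
      fix t assume "t \<in> {0..<2*n+1}"
      hence t: "t < 2*n+1" by simp
      show "X $$ (r,t) * Y $$ (t,s) = 0"
      proof (cases "t < n")
        case True thus ?thesis using Y0[OF t s] by simp
      next
        case False thus ?thesis using X0[OF r t] by simp
      qed
    qed
    finally show "(X * Y) $$ (r,s) = 0\<^sub>m (2*n+1) (2*n+1) $$ (r,s)" using r s by simp
  qed (use Xc Yc in auto)
qed

lemma getv_add: "h \<in> carrier_vec (card (UNIV::'m::finite set) * K) \<Longrightarrow> h' \<in> carrier_vec (card (UNIV::'m set) * K) \<Longrightarrow>
   getv K (h + h') (a::'m) = getv K h a + getv K h' a"
  unfolding getv_def using idx_lt[OF ix_lt[of a]] by (intro eq_vecI) auto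

lemma getv_smult: "h \<in> carrier_vec (card (UNIV::'m::finite set) * K) \<Longrightarrow> getv K (c \<cdot>\<^sub>v h) (a::'m) = c \<cdot>\<^sub>v getv K h a"
  unfolding getv_def using idx_lt[OF ix_lt[of a]] by (intro eq_vecI) auto

lemma getv_zero: "getv K (0\<^sub>v (card (UNIV::'m::finite set) * K)) (a::'m) = 0\<^sub>v K"
  unfolding getv_def using idx_lt[OF ix_lt[of a]] by (intro eq_vecI) auto

definition Wset :: "'m::{monoid_mult,finite} \<Rightarrow> 'm \<Rightarrow> 'm \<Rightarrow> nat \<Rightarrow> 'k::field vec set" where
  "Wset e p q n = {h \<in> carrier_vec (card (UNIV::'m set) * (2*n+1)). \<forall>x\<in>corner e. \<forall>a.
      getv (2*n+1) h (x * a) = rhoV e p q n x *\<^sub>v getv (2*n+1) h a}"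

definition Hm :: "'m::{monoid_mult,finite} \<Rightarrow> 'm \<Rightarrow> 'm \<Rightarrow> nat \<Rightarrow> 'k::field mat" where
  "Hm e p q n = mat (card (UNIV::'m set) * (2*n+1)) (2*n+1)
     (\<lambda>(r,j). rhoV e p q n (e * ixi (r div (2*n+1)) * e) $$ (r mod (2*n+1), j))"

lemma Hm_carrier: "(Hm (e::'m::{monoid_mult,finite}) p q n :: 'k::field mat) \<in> carrier_mat (card (UNIV::'m set) * (2*n+1)) (2*n+1)"
  unfolding Hm_def by simp

lemma getv_Hm:
  fixes e p q b :: "'m::{monoid_mult,finite}"
  assumes v: "v \<in> carrier_vec (2*n+1)"
  shows "getv (2*n+1) ((Hm e p q n :: 'k::field mat) *\<^sub>v v) b = rhoV e p q n (e * b * e) *\<^sub>v v"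
proof (rule eq_vecI)
  let ?K = "2*n+1"
  fix i assume "i < dim_vec (rhoV e p q n (e * b * e) *\<^sub>v v :: 'k vec)"
  moreover have "dim_row (rhoV e p q n (e * b * e) :: 'k mat) = ?K"
    using rhoV_carrier[of e p q n "e * b * e"] by (rule carrier_matD(1))
  ultimately have i: "i < ?K" by simp
  have r: "ix b * ?K + i < card (UNIV::'m set) * ?K" using idx_lt[OF ix_lt i] .
  have d: "(ix b * ?K + i) div ?K = ix b" "(ix b * ?K + i) mod ?K = i"
    using idx_div[OF i] idx_mod[OF i] by blast+
  have rc: "(rhoV e p q n (e * b * e) :: 'k mat) \<in> carrier_mat ?K ?K" by (rule rhoV_carrier)
  have "row (Hm e p q n :: 'k mat) (ix b * ?K + i) = row (rhoV e p q n (e * b * e)) i"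
    using r i d rc unfolding Hm_def by (intro eq_vecI) auto
  moreover have hc: "(Hm e p q n :: 'k mat) \<in> carrier_mat (card (UNIV::'m set) * ?K) ?K" by (rule Hm_carrier)
  ultimately show "getv ?K ((Hm e p q n :: 'k mat) *\<^sub>v v) b $ i = (rhoV e p q n (e * b * e) *\<^sub>v v) $ i"
    unfolding getv_def using i r rc hc by (simp add: carrier_matD)
qed (simp add: getv_def carrier_matD[OF rhoV_carrier])

definition Sel1 :: "nat \<Rightarrow> 'm::{monoid_mult,finite} itself \<Rightarrow> 'k::field mat" where
  "Sel1 K _ = selm K (card (UNIV::'m set) * K) (\<lambda>i. ix (1::'m) * K + i)"

lemma Sel1_carrier: "Sel1 K TYPE('m::{monoid_mult,finite}) \<in> carrier_mat K (card (UNIV::'m set) * K)"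
  unfolding Sel1_def selm_def by simp

lemma Sel1_vec:
  assumes h: "h \<in> carrier_vec (card (UNIV::'m::{monoid_mult,finite} set) * K)"
  shows "(Sel1 K TYPE('m) :: 'k::field mat) *\<^sub>v h = getv K h (1::'m)"
proof (rule eq_vecI)
  fix i assume "i < dim_vec (getv K h (1::'m))"
  hence i: "i < K" by (simp add: getv_def)
  show "((Sel1 K TYPE('m) :: 'k mat) *\<^sub>v h) $ i = getv K h (1::'m) $ i"
    unfolding Sel1_def getv_def using selm_vec[OF h, of i K "\<lambda>i. ix (1::'m) * K + i"] i idx_lt[OF ix_lt[of "1::'m"] i] by simp
qed (simp add: getv_def Sel1_def selm_def)

lemma dim_bound:
  fixes X Y :: "'k::field mat"
  assumes Y: "Y \<in> carrier_mat K d" and X: "X \<in> carrier_mat d K" and YX: "Y * X = 1\<^sub>m K"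
  shows "K \<le> d"
proof (rule ccontr)
  assume "\<not> K \<le> d"
  hence dK: "d < K" by simp
  define Y' where "Y' = mat K K (\<lambda>(i,j). if j < d then Y $$ (i,j) else 0)"
  define X' where "X' = mat K K (\<lambda>(i,j). if i < d then X $$ (i,j) else 0)"
  have Y'c: "Y' \<in> carrier_mat K K" and X'c: "X' \<in> carrier_mat K K" unfolding Y'_def X'_def by auto
  have "Y' * X' = Y * X"
  proof (rule eq_matI)
    fix i j assume "i < dim_row (Y * X)" "j < dim_col (Y * X)"
    hence i: "i < K" and j: "j < K" using X Y by auto
    have "(Y' * X') $$ (i,j) = (\<Sum>t\<in>{0..<K}. Y' $$ (i,t) * X' $$ (t,j))"
      by (rule mult_entry[OF Y'c X'c i j])
    also have "\<dots> = (\<Sum>t\<in>{0..<d}. Y' $$ (i,t) * X' $$ (t,j))"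
      by (rule sum.mono_neutral_right) (use dK i j in \<open>auto simp: X'_def\<close>)
    also have "\<dots> = (\<Sum>t\<in>{0..<d}. Y $$ (i,t) * X $$ (t,j))"
      by (rule sum.cong) (use dK i j in \<open>auto simp: X'_def Y'_def\<close>)
    also have "\<dots> = (Y * X) $$ (i,j)"
      using X Y i j by (simp add: index_mult_mat scalar_prod_def)
    finally show "(Y' * X') $$ (i,j) = (Y * X) $$ (i,j)" .
  qed (use X Y X'c Y'c in auto)
  hence "det Y' * det X' = 1" using det_mult[OF Y'c X'c] YX by simp
  moreover have "det Y' = 0"
  proof -
    have "Y' *\<^sub>v unit_vec K (K - 1) = col Y' (K - 1)" using mult_unit_vec_col[OF Y'c] dK by simp
    also have "\<dots> = 0\<^sub>v K" unfolding Y'_def using dK by (intro eq_vecI) auto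
    finally have "Y' *\<^sub>v unit_vec K (K - 1) = 0\<^sub>v K" .
    moreover have "unit_vec K (K - 1) \<noteq> (0\<^sub>v K :: 'k vec)" using dK by simp
    ultimately show ?thesis using det_0_iff_vec_prod_zero_field[OF Y'c]
      by (metis unit_vec_carrier)
  qed
  ultimately show False by simp
qed

context
  fixes e p q :: "'m::{monoid_mult,finite}" and n :: nat
  assumes idem: "e * e = e" and irp: "corner_irreducible e p" and irq: "corner_irreducible e q"
    and na: "\<not> corner_associates e p q"
begin

lemma pc: "p \<in> corner e" and qc: "q \<in> corner e"
  using irp irq unfolding corner_irreducible_def by auto

lemma rhoV_mult:
  assumes x: "x \<in> corner e" and y: "y \<in> corner e"
  shows "(rhoV e p q n (x * y) :: 'k::field mat) = rhoV e p q n x * rhoV e p q n y"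
proof -
  let ?K = "2*n+1"
  have cx: "(rhoV e p q n x :: 'k mat) \<in> carrier_mat ?K ?K" "(rhoV e p q n y :: 'k mat) \<in> carrier_mat ?K ?K"
    by (rule rhoV_carrier)+
  show ?thesis
  proof (cases "corner_unit e x")
    case ux: True
    show ?thesis
    proof (cases "corner_unit e y")
      case True
      hence "corner_unit e (x * y)" using unit_mult[OF idem ux] by blast
      thus ?thesis using ux True unfolding rhoV_def by simp
    next
      case False
      hence nu: "\<not> corner_unit e (x * y)" using unit_factor[OF idem x y] by blast
      have "corner_associates e (x * y) p \<longleftrightarrow> corner_associates e y p"
        by (rule assoc_left[OF idem ux y pc])
      moreover have "corner_associates e (x * y) q \<longleftrightarrow> corner_associates e y q"
        by (rule assoc_left[OF idem ux y qc])
      ultimately have "(rhoV e p q n (x * y) :: 'k mat) = rhoV e p q n y"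
        unfolding rhoV_def using nu False by simp
      also have "\<dots> = rhoV e p q n x * rhoV e p q n y" unfolding rhoV_def[of e p q n x] using ux cx by simp
      finally show ?thesis .
    qed
  next
    case nx: False
    show ?thesis
    proof (cases "corner_unit e y")
      case uy: True
      hence nu: "\<not> corner_unit e (x * y)" using unit_factor[OF idem x y] nx by blast
      have "corner_associates e (x * y) p \<longleftrightarrow> corner_associates e x p"
        by (rule assoc_right[OF idem uy x pc])
      moreover have "corner_associates e (x * y) q \<longleftrightarrow> corner_associates e x q"
        by (rule assoc_right[OF idem uy x qc])
      ultimately have "(rhoV e p q n (x * y) :: 'k mat) = rhoV e p q n x"
        unfolding rhoV_def using nu nx by simp
      also have "\<dots> = rhoV e p q n x * rhoV e p q n y" unfolding rhoV_def[of e p q n y] using uy cx by simp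
      finally show ?thesis .
    next
      case ny: False
      hence nu: "\<not> corner_unit e (x * y)" using unit_factor[OF idem x y] nx by blast
      have np: "\<not> corner_associates e (x * y) p" by (rule irred_prod[OF idem irp x y nx ny])
      have nq: "\<not> corner_associates e (x * y) q" by (rule irred_prod[OF idem irq x y nx ny])
      have lhs: "(rhoV e p q n (x * y) :: 'k mat) = 0\<^sub>m ?K ?K" unfolding rhoV_def using nu np nq by simp
      have "(rhoV e p q n x :: 'k mat) \<in> {Pm n, Qm n, 0\<^sub>m ?K ?K}" "(rhoV e p q n y :: 'k mat) \<in> {Pm n, Qm n, 0\<^sub>m ?K ?K}"
        unfolding rhoV_def using nx ny by auto
      moreover have "A * B = 0\<^sub>m ?K ?K" if A: "A \<in> {Pm n, Qm n, 0\<^sub>m ?K ?K}" and B: "B \<in> {Pm n, Qm n, 0\<^sub>m ?K ?K}"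
        for A B :: "'k mat"
      proof -
        have Ac: "A \<in> carrier_mat ?K ?K" and Bc: "B \<in> carrier_mat ?K ?K" using A B Pm_carrier Qm_carrier by auto
        show ?thesis
        proof (cases "A = 0\<^sub>m ?K ?K")
          case True thus ?thesis using Bc by simp
        next
          case nA: False
          show ?thesis
          proof (cases "B = 0\<^sub>m ?K ?K")
            case True thus ?thesis using Ac by simp
          next
            case False thus ?thesis using PQ_zero[of A n B] A B nA by auto
          qed
        qed
      qed
      ultimately have "(rhoV e p q n x :: 'k mat) * rhoV e p q n y = 0\<^sub>m ?K ?K" by blast
      thus ?thesis using lhs by simp
    qed
  qed
qed


lemma W_closed:
  shows "Wset e p q n \<subseteq> carrier_vec (card (UNIV::'m set) * (2*n+1))"
    and "(0\<^sub>v (card (UNIV::'m set) * (2*n+1)) :: 'k::field vec) \<in> Wset e p q n"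
    and "\<And>x y. x \<in> (Wset e p q n :: 'k vec set) \<Longrightarrow> y \<in> Wset e p q n \<Longrightarrow> x + y \<in> Wset e p q n"
    and "\<And>c x. x \<in> (Wset e p q n :: 'k vec set) \<Longrightarrow> c \<cdot>\<^sub>v x \<in> Wset e p q n"
    and "\<And>m x. x \<in> (Wset e p q n :: 'k vec set) \<Longrightarrow> rhoF (2*n+1) (m::'m) *\<^sub>v x \<in> Wset e p q n"
proof -
  let ?K = "2*n+1" and ?D = "card (UNIV::'m set) * (2*n+1)"
  have rc: "(rhoV e p q n x :: 'k mat) \<in> carrier_mat ?K ?K" for x by (rule rhoV_carrier)
  show "Wset e p q n \<subseteq> carrier_vec ?D" unfolding Wset_def by auto
  show "(0\<^sub>v ?D :: 'k vec) \<in> Wset e p q n" unfolding Wset_def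
  proof (intro CollectI conjI ballI allI)
    show "(0\<^sub>v ?D :: 'k vec) \<in> carrier_vec ?D" by simp
    fix x a assume "x \<in> corner e"
    have z1: "getv ?K (0\<^sub>v ?D :: 'k vec) (x * a) = 0\<^sub>v ?K" by (rule getv_zero)
    have z2: "getv ?K (0\<^sub>v ?D :: 'k vec) a = 0\<^sub>v ?K" by (rule getv_zero)
    show "getv ?K (0\<^sub>v ?D :: 'k vec) (x * a) = rhoV e p q n x *\<^sub>v getv ?K (0\<^sub>v ?D) a"
      unfolding z1 z2 using mat_vec_zero[OF rc[of x]] by simp
  qed
  show "x + y \<in> Wset e p q n" if xy: "x \<in> Wset e p q n" "y \<in> Wset e p q n" for x y :: "'k vec"
  proof -
    have xc: "x \<in> carrier_vec ?D" and yc: "y \<in> carrier_vec ?D" using xy unfolding Wset_def by auto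
    have "getv ?K (x + y) (z * a) = rhoV e p q n z *\<^sub>v getv ?K (x + y) a" if z: "z \<in> corner e" for z a
    proof -
      have "getv ?K (x + y) (z * a) = getv ?K x (z * a) + getv ?K y (z * a)" by (rule getv_add[OF xc yc])
      also have "\<dots> = rhoV e p q n z *\<^sub>v getv ?K x a + rhoV e p q n z *\<^sub>v getv ?K y a"
        using xy z unfolding Wset_def by auto
      also have "\<dots> = rhoV e p q n z *\<^sub>v (getv ?K x a + getv ?K y a)"
        by (rule mult_add_distrib_mat_vec[OF rc getv_carrier getv_carrier, symmetric])
      also have "getv ?K x a + getv ?K y a = getv ?K (x + y) a" by (rule getv_add[OF xc yc, symmetric])
      finally show ?thesis .
    qed
    thus ?thesis unfolding Wset_def using xc yc by auto
  qed
  show "c \<cdot>\<^sub>v x \<in> Wset e p q n" if xw: "x \<in> Wset e p q n" for c and x :: "'k vec"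
  proof -
    have xc: "x \<in> carrier_vec ?D" using xw unfolding Wset_def by auto
    have "getv ?K (c \<cdot>\<^sub>v x) (z * a) = rhoV e p q n z *\<^sub>v getv ?K (c \<cdot>\<^sub>v x) a" if z: "z \<in> corner e" for z a
    proof -
      have "getv ?K (c \<cdot>\<^sub>v x) (z * a) = c \<cdot>\<^sub>v getv ?K x (z * a)" by (rule getv_smult[OF xc])
      also have "\<dots> = c \<cdot>\<^sub>v (rhoV e p q n z *\<^sub>v getv ?K x a)" using xw z unfolding Wset_def by auto
      also have "\<dots> = rhoV e p q n z *\<^sub>v (c \<cdot>\<^sub>v getv ?K x a)"
        by (rule mult_mat_vec[OF rc getv_carrier, symmetric])
      also have "c \<cdot>\<^sub>v getv ?K x a = getv ?K (c \<cdot>\<^sub>v x) a" by (rule getv_smult[OF xc, symmetric])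
      finally show ?thesis .
    qed
    thus ?thesis unfolding Wset_def using xc by auto
  qed
  show "rhoF ?K m *\<^sub>v x \<in> Wset e p q n" if xw: "x \<in> Wset e p q n" for m :: 'm and x :: "'k vec"
  proof -
    have xc: "x \<in> carrier_vec ?D" using xw unfolding Wset_def by auto
    have fc: "(rhoF ?K m :: 'k mat) \<in> carrier_mat ?D ?D" by (rule rhoF_carrier)
    have "getv ?K (rhoF ?K m *\<^sub>v x) (z * a) = rhoV e p q n z *\<^sub>v getv ?K (rhoF ?K m *\<^sub>v x) a"
      if z: "z \<in> corner e" for z a
    proof -
      have "getv ?K (rhoF ?K m *\<^sub>v x) (z * a) = getv ?K x (z * a * m)" by (rule getv_rhoF[OF xc])
      also have "\<dots> = getv ?K x (z * (a * m))" by (simp add: mult.assoc)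
      also have "\<dots> = rhoV e p q n z *\<^sub>v getv ?K x (a * m)" using xw z unfolding Wset_def by auto
      also have "getv ?K x (a * m) = getv ?K (rhoF ?K m *\<^sub>v x) a" by (rule getv_rhoF[OF xc, symmetric])
      finally show ?thesis .
    qed
    moreover have "rhoF ?K m *\<^sub>v x \<in> carrier_vec ?D" using fc xc by simp
    ultimately show ?thesis unfolding Wset_def by auto
  qed
qed

lemma Hm_in_W: "v \<in> carrier_vec (2*n+1) \<Longrightarrow> (Hm e p q n :: 'k::field mat) *\<^sub>v v \<in> Wset e p q n"
proof -
  assume v: "v \<in> carrier_vec (2*n+1)"
  have "getv (2*n+1) ((Hm e p q n :: 'k mat) *\<^sub>v v) (x * a) =
        rhoV e p q n x *\<^sub>v getv (2*n+1) ((Hm e p q n :: 'k mat) *\<^sub>v v) a" if x: "x \<in> corner e" for x a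
  proof -
    have eae: "e * a * e \<in> corner e" unfolding corner_def by auto
    have "getv (2*n+1) ((Hm e p q n :: 'k mat) *\<^sub>v v) (x * a) = rhoV e p q n (e * (x * a) * e) *\<^sub>v v"
      by (rule getv_Hm[OF v])
    also have "e * (x * a) * e = x * (e * a * e)" using x corner_mem[OF idem] by (metis mult.assoc)
    also have "(rhoV e p q n (x * (e * a * e)) :: 'k mat) = rhoV e p q n x * rhoV e p q n (e * a * e)"
      by (rule rhoV_mult[OF x eae])
    finally have "getv (2*n+1) ((Hm e p q n :: 'k mat) *\<^sub>v v) (x * a) = (rhoV e p q n x * rhoV e p q n (e * a * e)) *\<^sub>v v" .
    also have "\<dots> = rhoV e p q n x *\<^sub>v (rhoV e p q n (e * a * e) *\<^sub>v v)"
      by (rule assoc_mult_mat_vec[OF rhoV_carrier rhoV_carrier v])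
    finally show ?thesis using getv_Hm[OF v, of e p q a] by simp
  qed
  moreover have hc: "(Hm e p q n :: 'k mat) \<in> carrier_mat (card (UNIV::'m set) * (2*n+1)) (2*n+1)"
    by (rule Hm_carrier)
  ultimately show ?thesis unfolding Wset_def using v by auto
qed

lemma rhoV_e: "(rhoV e p q n e :: 'k::field mat) = 1\<^sub>m (2*n+1)"
  unfolding rhoV_def using e_unit[OF idem] by simp

lemma self_assoc: "x \<in> corner e \<Longrightarrow> corner_associates e x x"
  unfolding corner_associates_def using e_unit[OF idem] corner_mem[OF idem] by metis

lemma rhoV_p: "(rhoV e p q n p :: 'k::field mat) = Pm n"
  using irp self_assoc[OF pc] unfolding rhoV_def corner_irreducible_def by simp

lemma rhoV_q: "(rhoV e p q n q :: 'k::field mat) = Qm n"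
proof -
  have "\<not> corner_associates e q p" using assoc_sym[OF idem _ pc, of q] na by blast
  thus ?thesis using irq self_assoc[OF qc] unfolding rhoV_def corner_irreducible_def by simp
qed


lemma main_indec: "\<exists>d (\<sigma> :: 'm \<Rightarrow> 'k::field mat). d \<ge> 2*n+1 \<and> indecomposable_rep d \<sigma>"
proof -
  define K where "K = 2*n+1"
  define D where "D = card (UNIV::'m set) * K"
  define \<rho>F :: "'m \<Rightarrow> 'k mat" where "\<rho>F = rhoF K"
  define \<rho>V :: "'m \<Rightarrow> 'k mat" where "\<rho>V = rhoV e p q n"
  define W :: "'k vec set" where "W = Wset e p q n"
  define H :: "'k mat" where "H = Hm e p q n"
  define S1 :: "'k mat" where "S1 = Sel1 K TYPE('m)"
  have Wc1: "W \<subseteq> carrier_vec D" unfolding W_def D_def K_def by (rule W_closed(1))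
  have Wc2: "0\<^sub>v D \<in> W" unfolding W_def D_def K_def by (rule W_closed(2))
  have Wc3: "\<And>x y. x \<in> W \<Longrightarrow> y \<in> W \<Longrightarrow> x + y \<in> W" unfolding W_def by (rule W_closed(3))
  have Wc4: "\<And>c x. x \<in> W \<Longrightarrow> c \<cdot>\<^sub>v x \<in> W" unfolding W_def by (rule W_closed(4))
  have Wc5: "\<And>m x. x \<in> W \<Longrightarrow> \<rho>F m *\<^sub>v x \<in> W" unfolding W_def \<rho>F_def K_def by (rule W_closed(5))
  have Fc: "\<rho>F m \<in> carrier_mat D D" for m unfolding \<rho>F_def D_def by (rule rhoF_carrier)
  have Vc: "\<rho>V x \<in> carrier_mat K K" for x unfolding \<rho>V_def K_def by (rule rhoV_carrier)
  have Hc: "H \<in> carrier_mat D K" unfolding H_def D_def K_def by (rule Hm_carrier)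
  have S1c: "S1 \<in> carrier_mat K D" unfolding S1_def D_def by (rule Sel1_carrier)
  have S1v: "S1 *\<^sub>v h = getv K h (1::'m)" if "h \<in> carrier_vec D" for h
    unfolding S1_def using Sel1_vec that unfolding D_def by blast
  have Fget: "getv K (\<rho>F m *\<^sub>v h) b = getv K h (b * m)" if "h \<in> carrier_vec D" for h m and b :: 'm
    unfolding \<rho>F_def using getv_rhoF that unfolding D_def by blast
  have Hget: "getv K (H *\<^sub>v v) b = \<rho>V (e * b * e) *\<^sub>v v" if "v \<in> carrier_vec K" for v and b :: 'm
    unfolding H_def \<rho>V_def K_def using getv_Hm that unfolding K_def by blast
  have HW: "H *\<^sub>v v \<in> W" if "v \<in> carrier_vec K" for v
    unfolding H_def W_def using Hm_in_W that unfolding K_def by blast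
  have Wget: "getv K h (x * a) = \<rho>V x *\<^sub>v getv K h a" if "h \<in> W" "x \<in> corner e" for h x a
    using that unfolding W_def Wset_def \<rho>V_def K_def by blast
  have WD: "h \<in> carrier_vec D" if "h \<in> W" for h using Wc1 that by blast
  have Ve: "\<rho>V e = 1\<^sub>m K" unfolding \<rho>V_def K_def by (rule rhoV_e)
  have Vmult: "\<rho>V (x * y) = \<rho>V x * \<rho>V y" if "x \<in> corner e" "y \<in> corner e" for x y
    unfolding \<rho>V_def using rhoV_mult that by blast
  have ec: "e \<in> corner e" by (rule e_corner[OF idem])
  have cm: "e * x = x" "x * e = x" if "x \<in> corner e" for x using corner_mem[OF idem] that by auto
  have ebe: "e * b * e \<in> corner e" for b unfolding corner_def by auto
  have Wget1: "getv K h e = getv K h (1::'m)" if "h \<in> W" for h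
  proof -
    have "getv K h (e * (1::'m)) = \<rho>V e *\<^sub>v getv K h (1::'m)" by (rule Wget[OF that ec])
    thus ?thesis unfolding Ve by simp
  qed
  have rep: "is_rep D \<rho>F" unfolding \<rho>F_def D_def by (rule rhoF_rep)
  obtain d B \<sigma> where Bc: "B \<in> carrier_mat D d" and srep: "is_rep d \<sigma>"
    and comm: "\<And>m. \<rho>F m * B = B * \<sigma> m"
    and inW: "\<And>c. c \<in> carrier_vec d \<Longrightarrow> B *\<^sub>v c \<in> W"
    and spanW: "\<And>x. x \<in> W \<Longrightarrow> \<exists>c\<in>carrier_vec d. B *\<^sub>v c = x"
    and inj: "\<And>c. c \<in> carrier_vec d \<Longrightarrow> B *\<^sub>v c = 0\<^sub>v D \<Longrightarrow> c = 0\<^sub>v d"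
  proof (rule subrep[OF rep Wc1 Wc2 Wc3 Wc4 Wc5])
    fix d B \<sigma> assume "B \<in> carrier_mat D d" "is_rep d \<sigma>" "\<And>m. \<rho>F m * B = B * \<sigma> m"
      "\<And>c. c \<in> carrier_vec d \<Longrightarrow> B *\<^sub>v c \<in> W"
      "\<And>x. x \<in> W \<Longrightarrow> \<exists>c\<in>carrier_vec d. B *\<^sub>v c = x"
      "\<And>c. c \<in> carrier_vec d \<Longrightarrow> B *\<^sub>v c = 0\<^sub>v D \<Longrightarrow> c = 0\<^sub>v d"
    then show thesis by (rule that)
  qed
  have sc: "\<sigma> m \<in> carrier_mat d d" for m using srep unfolding is_rep_def by auto
  have Bsv: "B *\<^sub>v (\<sigma> m *\<^sub>v c) = \<rho>F m *\<^sub>v (B *\<^sub>v c)" if "c \<in> carrier_vec d" for m c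
  proof -
    have "B *\<^sub>v (\<sigma> m *\<^sub>v c) = (B * \<sigma> m) *\<^sub>v c" by (rule assoc_mult_mat_vec[OF Bc sc that, symmetric])
    also have "\<dots> = (\<rho>F m * B) *\<^sub>v c" using comm by simp
    also have "\<dots> = \<rho>F m *\<^sub>v (B *\<^sub>v c)" by (rule assoc_mult_mat_vec[OF Fc Bc that])
    finally show ?thesis .
  qed
  have injv: "u = w" if "u \<in> carrier_vec d" "w \<in> carrier_vec d" "B *\<^sub>v u = B *\<^sub>v w" for u w
  proof -
    have "B *\<^sub>v (u - w) = 0\<^sub>v D" using that Bc by (simp add: mult_minus_distrib_mat_vec)
    hence "u - w = 0\<^sub>v d" using inj that by simp
    hence z: "\<And>i. i < d \<Longrightarrow> (u - w) $ i = 0" by simp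
    show ?thesis
    proof (rule eq_vecI)
      fix i assume "i < dim_vec w"
      hence i: "i < d" using that by simp
      show "u $ i = w $ i" using z[OF i] that i by simp
    qed (use that in simp)
  qed
  have colH: "\<exists>c\<in>carrier_vec d. B *\<^sub>v c = col H j" if "j < K" for j
  proof -
    have "col H j = H *\<^sub>v unit_vec K j" using mult_unit_vec_col[OF Hc that] by simp
    thus ?thesis using spanW HW[of "unit_vec K j"] by simp
  qed
  define cH where "cH j = (SOME c. c \<in> carrier_vec d \<and> B *\<^sub>v c = col H j)" for j
  have cH: "cH j \<in> carrier_vec d \<and> B *\<^sub>v cH j = col H j" if "j < K" for j
  proof -
    from colH[OF that] have "\<exists>c. c \<in> carrier_vec d \<and> B *\<^sub>v c = col H j" by blast
    thus ?thesis unfolding cH_def by (rule someI_ex)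
  qed
  define X where "X = mat d K (\<lambda>(i,j). cH j $ i)"
  have Xc: "X \<in> carrier_mat d K" unfolding X_def by simp
  have BX: "B * X = H"
  proof (rule mat_col_eqI)
    fix j assume "j < dim_col H" hence j: "j < K" using Hc by simp
    have "col X j = cH j" unfolding X_def using cH[OF j] j by (intro eq_vecI) auto
    thus "col (B * X) j = col H j" using col_mult2[OF Bc Xc j] cH[OF j] by simp
  qed (use Bc Xc Hc in auto)
  have BXv: "B *\<^sub>v (X *\<^sub>v v) = H *\<^sub>v v" if "v \<in> carrier_vec K" for v
    using BX Bc Xc that by (metis assoc_mult_mat_vec)
  define Y where "Y = S1 * B"
  have Yc: "Y \<in> carrier_mat K d" unfolding Y_def using S1c Bc by simp
  have Yv: "Y *\<^sub>v c = getv K (B *\<^sub>v c) (1::'m)" if "c \<in> carrier_vec d" for c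
    unfolding Y_def using S1v Bc S1c that by simp
  have Ysa: "Y *\<^sub>v (\<sigma> a *\<^sub>v c) = getv K (B *\<^sub>v c) a" if c: "c \<in> carrier_vec d" for a c
  proof -
    have "Y *\<^sub>v (\<sigma> a *\<^sub>v c) = getv K (\<rho>F a *\<^sub>v (B *\<^sub>v c)) (1::'m)" using Yv[of "\<sigma> a *\<^sub>v c"] sc[of a] c Bsv by simp
    also have "\<dots> = getv K (B *\<^sub>v c) a" using Fget Bc c by simp
    finally show ?thesis .
  qed
  have sXv: "X *\<^sub>v (\<rho>V x *\<^sub>v v) = \<sigma> x *\<^sub>v (X *\<^sub>v v)" if x: "x \<in> corner e" and v: "v \<in> carrier_vec K" for x v
  proof (rule injv)
    show "X *\<^sub>v (\<rho>V x *\<^sub>v v) \<in> carrier_vec d" "\<sigma> x *\<^sub>v (X *\<^sub>v v) \<in> carrier_vec d"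
      using Xc Vc[of x] sc[of x] v by auto
    have "B *\<^sub>v (X *\<^sub>v (\<rho>V x *\<^sub>v v)) = H *\<^sub>v (\<rho>V x *\<^sub>v v)" using BXv Vc[of x] v by simp
    also have "\<dots> = \<rho>F x *\<^sub>v (H *\<^sub>v v)"
    proof (rule vec_eq_by_get[where 'm='m and K=K, folded D_def])
      show "H *\<^sub>v (\<rho>V x *\<^sub>v v) \<in> carrier_vec D" "\<rho>F x *\<^sub>v (H *\<^sub>v v) \<in> carrier_vec D"
        using Hc Fc[of x] Vc[of x] v by auto
      fix b :: 'm
      have "getv K (H *\<^sub>v (\<rho>V x *\<^sub>v v)) b = \<rho>V (e * b * e) *\<^sub>v (\<rho>V x *\<^sub>v v)" using Hget Vc[of x] v by simp
      also have "\<dots> = \<rho>V (e * b * e * x) *\<^sub>v v" using Vmult[OF ebe x] Vc[of x] Vc[of "e * b * e"] v by simp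
      also have "e * b * e * x = e * (b * x) * e" using cm[OF x] by (metis mult.assoc)
      also have "\<rho>V (e * (b * x) * e) *\<^sub>v v = getv K (\<rho>F x *\<^sub>v (H *\<^sub>v v)) b"
        using Fget Hget Hc v by simp
      finally show "getv K (H *\<^sub>v (\<rho>V x *\<^sub>v v)) b = getv K (\<rho>F x *\<^sub>v (H *\<^sub>v v)) b" .
    qed
    also have "\<dots> = \<rho>F x *\<^sub>v (B *\<^sub>v (X *\<^sub>v v))" using BXv v by simp
    also have "\<dots> = B *\<^sub>v (\<sigma> x *\<^sub>v (X *\<^sub>v v))" using Bsv Xc v by simp
    finally show "B *\<^sub>v (X *\<^sub>v (\<rho>V x *\<^sub>v v)) = B *\<^sub>v (\<sigma> x *\<^sub>v (X *\<^sub>v v))" .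
  qed
  have Ysv: "Y *\<^sub>v (\<sigma> x *\<^sub>v c) = \<rho>V x *\<^sub>v (Y *\<^sub>v c)" if x: "x \<in> corner e" and c: "c \<in> carrier_vec d" for x c
  proof -
    have "Y *\<^sub>v (\<sigma> x *\<^sub>v c) = getv K (B *\<^sub>v c) (x * 1)" using Ysa c by simp
    also have "\<dots> = \<rho>V x *\<^sub>v getv K (B *\<^sub>v c) (1::'m)" using Wget[OF inW[OF c] x] .
    finally show ?thesis using Yv c by simp
  qed
  have XYv: "X *\<^sub>v (Y *\<^sub>v (\<sigma> e *\<^sub>v c)) = \<sigma> e *\<^sub>v c" if c: "c \<in> carrier_vec d" for c
  proof (rule injv)
    show "X *\<^sub>v (Y *\<^sub>v (\<sigma> e *\<^sub>v c)) \<in> carrier_vec d" "\<sigma> e *\<^sub>v c \<in> carrier_vec d"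
      using Xc Yc sc[of e] c by auto
    let ?h = "B *\<^sub>v c"
    have h: "?h \<in> W" using inW c .
    have "B *\<^sub>v (X *\<^sub>v (Y *\<^sub>v (\<sigma> e *\<^sub>v c))) = H *\<^sub>v getv K ?h e"
      using BXv Yc sc[of e] c Ysa by simp
    also have "\<dots> = \<rho>F e *\<^sub>v ?h"
    proof (rule vec_eq_by_get[where 'm='m and K=K, folded D_def])
      show "H *\<^sub>v getv K ?h e \<in> carrier_vec D" "\<rho>F e *\<^sub>v ?h \<in> carrier_vec D"
        using Hc Fc[of e] Bc c by auto
      fix b :: 'm
      have "getv K (H *\<^sub>v getv K ?h e) b = \<rho>V (e * b * e) *\<^sub>v getv K ?h (1::'m)"
        using Hget Wget1[OF h] by simp
      also have "\<dots> = getv K ?h (e * b * e * 1)" using Wget[OF h ebe[of b], of "1::'m"] by simp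
      also have "\<dots> = getv K ?h (e * (b * e))" by (simp add: mult.assoc)
      also have "\<dots> = getv K ?h (b * e)" using Wget[OF h ec] Ve by simp
      also have "\<dots> = getv K (\<rho>F e *\<^sub>v ?h) b" using Fget Bc c by simp
      finally show "getv K (H *\<^sub>v getv K ?h e) b = getv K (\<rho>F e *\<^sub>v ?h) b" .
    qed
    also have "\<dots> = B *\<^sub>v (\<sigma> e *\<^sub>v c)" using Bsv c by simp
    finally show "B *\<^sub>v (X *\<^sub>v (Y *\<^sub>v (\<sigma> e *\<^sub>v c))) = B *\<^sub>v (\<sigma> e *\<^sub>v c)" .
  qed
  have YXv: "Y *\<^sub>v (X *\<^sub>v v) = v" if v: "v \<in> carrier_vec K" for v
  proof -
    have "Y *\<^sub>v (X *\<^sub>v v) = getv K (H *\<^sub>v v) (1::'m)" using Yv Xc v BXv by simp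
    also have "\<dots> = v" using Hget v cm[OF ec] Ve by simp
    finally show ?thesis .
  qed
  have YX: "Y * X = 1\<^sub>m K"
    by (rule mat_eq_by_vec[OF mult_carrier_mat[OF Yc Xc] one_carrier_mat]) (use YXv Yc Xc in simp)
  have Kd: "K \<le> d" by (rule dim_bound[OF Yc Xc YX])
  have Yse: "Y *\<^sub>v (\<sigma> e *\<^sub>v c) = Y *\<^sub>v c" if "c \<in> carrier_vec d" for c
    using Ysv[OF ec that] Ve Yc that by simp
  have seX: "\<sigma> e *\<^sub>v (X *\<^sub>v v) = X *\<^sub>v v" if "v \<in> carrier_vec K" for v
    using sXv[OF ec that] Ve that by simp
  have "indecomposable_rep d \<sigma>"
  proof (rule indec_crit[OF srep])
    show "d > 0" using Kd unfolding K_def by simp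
    fix E assume Ec: "E \<in> carrier_mat d d" and EE: "E * E = E" and Ecomm: "\<And>m. E * \<sigma> m = \<sigma> m * E"
    have Ecv: "E *\<^sub>v (\<sigma> m *\<^sub>v c) = \<sigma> m *\<^sub>v (E *\<^sub>v c)" if "c \<in> carrier_vec d" for m c
      using Ecomm[of m] Ec sc[of m] that by (metis assoc_mult_mat_vec)
    have EEv: "E *\<^sub>v (E *\<^sub>v c) = E *\<^sub>v c" if "c \<in> carrier_vec d" for c
      using EE Ec that by (metis assoc_mult_mat_vec)
    define T where "T = Y * E * X"
    have Tc: "T \<in> carrier_mat K K" unfolding T_def using Yc Ec Xc by simp
    have Tv: "T *\<^sub>v v = Y *\<^sub>v (E *\<^sub>v (X *\<^sub>v v))" if v: "v \<in> carrier_vec K" for v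
    proof -
      have xv: "X *\<^sub>v v \<in> carrier_vec d" using Xc v by simp
      have "T *\<^sub>v v = Y * E *\<^sub>v (X *\<^sub>v v)" unfolding T_def
        by (rule assoc_mult_mat_vec[OF mult_carrier_mat[OF Yc Ec] Xc v])
      also have "\<dots> = Y *\<^sub>v (E *\<^sub>v (X *\<^sub>v v))" by (rule assoc_mult_mat_vec[OF Yc Ec xv])
      finally show ?thesis .
    qed
    have Tcomm: "T * \<rho>V x = \<rho>V x * T" if x: "x \<in> corner e" for x
    proof (rule mat_eq_by_vec[OF mult_carrier_mat[OF Tc Vc] mult_carrier_mat[OF Vc Tc]])
      fix v :: "'k vec" assume v: "v \<in> carrier_vec K"
      have "T * \<rho>V x *\<^sub>v v = Y *\<^sub>v (E *\<^sub>v (X *\<^sub>v (\<rho>V x *\<^sub>v v)))" using Tv Tc Vc[of x] v by simp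
      also have "\<dots> = Y *\<^sub>v (E *\<^sub>v (\<sigma> x *\<^sub>v (X *\<^sub>v v)))" using sXv[OF x v] by simp
      also have "\<dots> = Y *\<^sub>v (\<sigma> x *\<^sub>v (E *\<^sub>v (X *\<^sub>v v)))" using Ecv Xc v by simp
      also have "\<dots> = \<rho>V x *\<^sub>v (Y *\<^sub>v (E *\<^sub>v (X *\<^sub>v v)))" using Ysv[OF x] Ec Xc v by simp
      also have "\<dots> = \<rho>V x * T *\<^sub>v v" using Tv Tc Vc[of x] v by simp
      finally show "T * \<rho>V x *\<^sub>v v = \<rho>V x * T *\<^sub>v v" .
    qed
    have TT: "T * T = T"
    proof (rule mat_eq_by_vec[OF mult_carrier_mat[OF Tc Tc] Tc])
      fix v :: "'k vec" assume v: "v \<in> carrier_vec K"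
      let ?w = "X *\<^sub>v v"
      have w: "?w \<in> carrier_vec d" using Xc v by simp
      have "E *\<^sub>v ?w = \<sigma> e *\<^sub>v (E *\<^sub>v ?w)" using Ecv[OF w, of e] seX[OF v] by simp
      hence "X *\<^sub>v (Y *\<^sub>v (E *\<^sub>v ?w)) = E *\<^sub>v ?w" using XYv[of "E *\<^sub>v ?w"] Ec w by simp
      hence "T * T *\<^sub>v v = Y *\<^sub>v (E *\<^sub>v (E *\<^sub>v ?w))" using Tv Tc v Ec w Yc by simp
      also have "\<dots> = T *\<^sub>v v" using EEv[OF w] Tv v by simp
      finally show "T * T *\<^sub>v v = T *\<^sub>v v" .
    qed
    have "T = 0\<^sub>m K K \<or> T = 1\<^sub>m K"
      using kron_comm[OF K_def Tc] Tcomm[OF pc] Tcomm[OF qc] TT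
      unfolding \<rho>V_def rhoV_p rhoV_q by blast
    have key: "getv K (B *\<^sub>v (E *\<^sub>v c)) a = T *\<^sub>v getv K (B *\<^sub>v c) a" if c: "c \<in> carrier_vec d" for c and a :: 'm
    proof -
      let ?u = "\<sigma> a *\<^sub>v c"
      have u: "?u \<in> carrier_vec d" using sc[of a] c by simp
      have "getv K (B *\<^sub>v (E *\<^sub>v c)) a = Y *\<^sub>v (\<sigma> a *\<^sub>v (E *\<^sub>v c))" using Ysa Ec c by simp
      also have "\<dots> = Y *\<^sub>v (E *\<^sub>v ?u)" using Ecv c by simp
      also have "\<dots> = Y *\<^sub>v (\<sigma> e *\<^sub>v (E *\<^sub>v ?u))" using Yse Ec u by simp
      also have "\<dots> = Y *\<^sub>v (E *\<^sub>v (\<sigma> e *\<^sub>v ?u))" using Ecv u by simp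
      also have "\<dots> = Y *\<^sub>v (E *\<^sub>v (X *\<^sub>v (Y *\<^sub>v (\<sigma> e *\<^sub>v ?u))))" using XYv u by simp
      also have "\<dots> = Y *\<^sub>v (E *\<^sub>v (X *\<^sub>v (Y *\<^sub>v ?u)))" using Yse u by simp
      also have "\<dots> = T *\<^sub>v (Y *\<^sub>v ?u)" using Tv Yc u by simp
      also have "\<dots> = T *\<^sub>v getv K (B *\<^sub>v c) a" using Ysa c by simp
      finally show ?thesis .
    qed
    from \<open>T = 0\<^sub>m K K \<or> T = 1\<^sub>m K\<close> show "E = 0\<^sub>m d d \<or> E = 1\<^sub>m d"
    proof
      assume T0: "T = 0\<^sub>m K K"
      have gz: "getv K (0\<^sub>v D :: 'k vec) b = 0\<^sub>v K" for b :: 'm unfolding D_def by (rule getv_zero)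
      have "E = 0\<^sub>m d d"
      proof (rule mat_eq_by_vec[OF Ec zero_carrier_mat])
        fix c :: "'k vec" assume c: "c \<in> carrier_vec d"
        have "B *\<^sub>v (E *\<^sub>v c) = 0\<^sub>v D"
          by (rule vec_eq_by_get[where 'm='m and K=K, folded D_def])
             (use Bc Ec c key T0 gz in \<open>auto simp: zero_mat_vec\<close>)
        hence "E *\<^sub>v c = 0\<^sub>v d" using inj Ec c by simp
        thus "E *\<^sub>v c = 0\<^sub>m d d *\<^sub>v c" using c by (simp add: zero_mat_vec)
      qed
      thus ?thesis by simp
    next
      assume T1: "T = 1\<^sub>m K"
      have "E = 1\<^sub>m d"
      proof (rule mat_eq_by_vec[OF Ec one_carrier_mat])
        fix c :: "'k vec" assume c: "c \<in> carrier_vec d"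
        have "B *\<^sub>v (E *\<^sub>v c) = B *\<^sub>v c"
          by (rule vec_eq_by_get[where 'm='m and K=K, folded D_def])
             (use Bc Ec c key T1 in auto)
        hence "E *\<^sub>v c = c" using injv Ec c by simp
        thus "E *\<^sub>v c = 1\<^sub>m d *\<^sub>v c" using c by simp
      qed
      thus ?thesis by simp
    qed
  qed
  thus ?thesis using Kd unfolding K_def by blast
qed

end


theorem corollary9:
  assumes "\<exists>e :: 'm::{monoid_mult, finite}. e * e = e \<and>
             (\<exists>p q. corner_irreducible e p \<and> corner_irreducible e q \<and> \<not> corner_associates e p q)"
  shows "infinite_rep_type TYPE('m) TYPE('k::field)"
proof -
  from assms obtain e p q :: 'm where h: "e * e = e" "corner_irreducible e p" "corner_irreducible e q"
    "\<not> corner_associates e p q" by blast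
  show ?thesis
  proof (rule inf_from_unbounded)
    fix N :: nat
    obtain d and \<sigma> :: "'m \<Rightarrow> 'k mat" where d: "d \<ge> 2*N+1" and ind: "indecomposable_rep d \<sigma>"
      using main_indec[OF h, of N] by blast
    show "\<exists>d (\<sigma> :: 'm \<Rightarrow> 'k mat). d \<ge> N \<and> indecomposable_rep d \<sigma>"
      using d ind by (intro exI[of _ d] exI[of _ \<sigma>]) auto
  qed
qed

end
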